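(* For every integer $k\ge2$, \[\mathsf P(k)=\bigoplus_{s=0}^{\lfloor k/2\rfloor}\underline x^s\,\mathsf I(k-2s)\,\underline x^s,\] where $\underline x^s\,\mathsf I(k-2s)\,\underline x^s=\{\underline x^sP(\underline x)\underline x^s:P\in\mathsf I(k-2s)\}$.
   Context: $\mathbb R_{0,m}$ is the $2^m$-dimensional real Clifford algebra generated by the orthonormal basis $e_1,\dots,e_m$ of $\mathbb R^m$ with relations $e_je_k+e_ke_j=-2\delta_{jk}$. A point of $\mathbb R^m$ is identified with $\underline x=\sum_jx_je_j$ (so $\underline x^s$ is its $s$-th Clifford power). The Dirac operator is $\partial_{\underline x}=\sum_je_j\partial_{x_j}$, and $\partial_{\underline x}f\partial_{\underline x}=\sum_{i,j}e_i(\partial_{x_i}\partial_{x_j}f)e_j$. $\mathsf P(k)$ is the real vector space of $\mathbb R_{0,m}$-valued homogeneous polynomials of degree $k$ on $\mathbb R^m$, and $\mathsf I(k)=\{P\in\mathsf P(k):\partial_{\underline x}P\partial_{\underline x}=0\}$ (inframonogenic homogeneous polynomials of degree $k$); note $\mathsf I(0)=\mathsf P(0)$ and $\mathsf I(1)=\mathsf P(1)$. *)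

theory Defs
  imports Complex_Main
begin

text \<open>Clifford algebra R_{0,m}: an element is a real coefficient function on blades
  (subsets A of {0..<m}, standing for e_A = e_{a1}...e_{ar}, a1<...<ar); coefficients of
  sets not contained in {0..<m} are zero. Basis vector e_{j+1} of the paper is blade {j}.\<close>

type_synonym cliff = "nat set \<Rightarrow> real"

definition clif :: "nat \<Rightarrow> cliff set" where
  "clif m = {a. \<forall>A. \<not> A \<subseteq> {..<m} \<longrightarrow> a A = 0}"

definition blade :: "nat set \<Rightarrow> cliff" where
  "blade A = (\<lambda>B. if B = A then 1 else 0)"

text \<open>e_A e_B = (-1)^(#{(a,b) in A x B. b < a} + |A \<inter> B|) e_(A symdiff B), since e_j^2 = -1.\<close>
definition csign :: "nat set \<Rightarrow> nat set \<Rightarrow> real" where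
  "csign A B = (-1) ^ (card {(a,b). a \<in> A \<and> b \<in> B \<and> b < a} + card (A \<inter> B))"

definition cmult :: "nat \<Rightarrow> cliff \<Rightarrow> cliff \<Rightarrow> cliff" where
  "cmult m a b = (\<lambda>C. \<Sum>A\<in>Pow {..<m}. \<Sum>B\<in>Pow {..<m}.
      if (A - B) \<union> (B - A) = C then csign A B * a A * b B else 0)"

text \<open>Clifford-valued polynomials in x_1..x_m (variables indexed 0..<m) represented by their
  coefficient function on exponent vectors alpha (x^alpha = prod x_i^(alpha i)).\<close>

type_synonym cpoly = "(nat \<Rightarrow> nat) \<Rightarrow> cliff"

definition mons :: "nat \<Rightarrow> nat \<Rightarrow> (nat \<Rightarrow> nat) set" where
  "mons m k = {\<alpha>. (\<forall>i. m \<le> i \<longrightarrow> \<alpha> i = 0) \<and> (\<Sum>i<m. \<alpha> i) = k}"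

definition hpoly :: "nat \<Rightarrow> nat \<Rightarrow> cpoly set" where
  "hpoly m k = {p. (\<forall>\<alpha>. \<alpha> \<notin> mons m k \<longrightarrow> p \<alpha> = (\<lambda>C. 0)) \<and> (\<forall>\<alpha>. p \<alpha> \<in> clif m)}"

definition unitv :: "nat \<Rightarrow> nat \<Rightarrow> nat" where
  "unitv j = (\<lambda>i. if i = j then 1 else 0)"

definition pderiv_x :: "nat \<Rightarrow> cpoly \<Rightarrow> cpoly" where
  "pderiv_x j p = (\<lambda>\<alpha> C. real (\<alpha> j + 1) * p (\<lambda>i. \<alpha> i + unitv j i) C)"

definition dirac2 :: "nat \<Rightarrow> cpoly \<Rightarrow> cpoly" where
  "dirac2 m p = (\<lambda>\<alpha> C. \<Sum>i<m. \<Sum>j<m.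
      cmult m (blade {i}) (cmult m (pderiv_x i (pderiv_x j p) \<alpha>) (blade {j})) C)"

definition infra :: "nat \<Rightarrow> nat \<Rightarrow> cpoly set" where
  "infra m k = {p \<in> hpoly m k. dirac2 m p = (\<lambda>\<alpha> C. 0)}"

definition pmult :: "nat \<Rightarrow> cpoly \<Rightarrow> cpoly \<Rightarrow> cpoly" where
  "pmult m p q = (\<lambda>\<gamma> C. \<Sum>\<alpha>\<in>{\<alpha>. \<forall>i. \<alpha> i \<le> \<gamma> i \<and> (m \<le> i \<longrightarrow> \<alpha> i = 0)}.
      cmult m (p \<alpha>) (q (\<lambda>i. \<gamma> i - \<alpha> i)) C)"

definition pone :: cpoly where
  "pone = (\<lambda>\<alpha> C. if (\<forall>i. \<alpha> i = 0) \<and> C = {} then 1 else 0)"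

definition xvec :: "nat \<Rightarrow> cpoly" where
  "xvec m = (\<lambda>\<alpha> C. \<Sum>j<m. if \<alpha> = unitv j then blade {j} C else 0)"

definition xpow :: "nat \<Rightarrow> nat \<Rightarrow> cpoly" where
  "xpow m s = (pmult m (xvec m) ^^ s) pone"

definition xIx :: "nat \<Rightarrow> nat \<Rightarrow> nat \<Rightarrow> cpoly set" where
  "xIx m k s = {pmult m (pmult m (xpow m s) P) (xpow m s) | P. P \<in> infra m (k - 2 * s)}"

end

theory Submission
  imports Defs "HOL-Library.Function_Algebras"
begin


definition sg :: "nat \<Rightarrow> nat \<Rightarrow> real" where "sg a b = (if b \<le> a then -1 else 1)"

lemma sg_sq[simp]: "sg a b * sg a b = 1" by (simp add: sg_def)

lemma csign_prod:
  assumes "finite A" "finite B"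
  shows "csign A B = (\<Prod>a\<in>A. \<Prod>b\<in>B. sg a b)"
proof -
  let ?S = "{(a,b). a \<in> A \<and> b \<in> B \<and> b < a}"
  let ?T = "(A \<times> B) \<inter> {p. snd p \<le> fst p}"
  have fS: "finite ?S" by (rule finite_subset[of _ "A \<times> B"]) (use assms in auto)
  have eq: "?T = ?S \<union> (\<lambda>a. (a,a)) ` (A \<inter> B)" by auto
  have "card ?T = card ?S + card ((\<lambda>a. (a,a)) ` (A \<inter> B))"
    unfolding eq by (rule card_Un_disjoint) (use fS assms in auto)
  also have "card ((\<lambda>a. (a,a)) ` (A \<inter> B)) = card (A \<inter> B)"
    by (rule card_image) (auto simp: inj_on_def)
  finally have c: "card ?T = card ?S + card (A \<inter> B)" .
  have "(\<Prod>a\<in>A. \<Prod>b\<in>B. sg a b) = (\<Prod>p\<in>A \<times> B. sg (fst p) (snd p))"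
    by (simp add: prod.cartesian_product case_prod_beta)
  also have "\<dots> = (\<Prod>p\<in>?T. -1) * (\<Prod>p\<in>(A \<times> B) \<inter> - {p. snd p \<le> fst p}. 1)"
    unfolding sg_def using assms by (subst prod.If_cases) auto
  also have "\<dots> = (-1) ^ card ?T" by simp
  finally show ?thesis unfolding csign_def c by simp
qed

lemma prod_symdiff:
  fixes g :: "nat \<Rightarrow> real"
  assumes "finite A" "finite B" "\<And>x. g x * g x = 1"
  shows "prod g ((A - B) \<union> (B - A)) = prod g A * prod g B"
proof -
  have eA: "A = (A - B) \<union> (A \<inter> B)" by blast
  have eB: "B = (B - A) \<union> (A \<inter> B)" by blast
  have AB: "prod g A = prod g (A - B) * prod g (A \<inter> B)"
    by (subst eA, rule prod.union_disjoint) (use assms in auto)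
  have BA: "prod g B = prod g (B - A) * prod g (A \<inter> B)"
    by (subst eB, rule prod.union_disjoint) (use assms in auto)
  have sq: "prod g (A \<inter> B) * prod g (A \<inter> B) = 1"
    by (simp add: assms(3) flip: prod.distrib)
  have "prod g ((A - B) \<union> (B - A)) = prod g (A - B) * prod g (B - A)"
    using assms by (intro prod.union_disjoint) auto
  also have "\<dots> = prod g (A - B) * prod g (B - A) * (prod g (A \<inter> B) * prod g (A \<inter> B))"
    using sq by simp
  also have "\<dots> = prod g A * prod g B" unfolding AB BA by (simp add: algebra_simps)
  finally show ?thesis .
qed

lemma prod_sg_sq: "finite B \<Longrightarrow> (\<Prod>b\<in>B. sg a b) * (\<Prod>b\<in>B. sg a b) = 1"
  by (simp flip: prod.distrib)

lemma prod_sg_sq': "finite B \<Longrightarrow> (\<Prod>b\<in>B. sg b a) * (\<Prod>b\<in>B. sg b a) = 1"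
  by (simp flip: prod.distrib)

lemma csign_sq: "finite A \<Longrightarrow> finite B \<Longrightarrow> csign A B * csign A B = 1"
  unfolding csign_def by (simp flip: power_add add: power_even_eq)

lemma csign_symdiff_left:
  assumes "finite A" "finite B" "finite C"
  shows "csign ((A - B) \<union> (B - A)) C = csign A C * csign B C"
  using assms by (simp add: csign_prod prod_symdiff prod_sg_sq)

lemma csign_symdiff_right:
  assumes "finite A" "finite B" "finite C"
  shows "csign A ((B - C) \<union> (C - B)) = csign A B * csign A C"
proof -
  have "csign A ((B - C) \<union> (C - B)) = (\<Prod>a\<in>A. (\<Prod>b\<in>B. sg a b) * (\<Prod>b\<in>C. sg a b))"
    using assms by (simp add: csign_prod prod_symdiff)
  also have "\<dots> = csign A B * csign A C" using assms by (simp add: csign_prod prod.distrib)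
  finally show ?thesis .
qed

lemma cocycle:
  assumes "finite A" "finite B" "finite C"
  shows "csign A B * csign ((A - B) \<union> (B - A)) C = csign A ((B - C) \<union> (C - B)) * csign B C"
  using assms by (simp add: csign_symdiff_left csign_symdiff_right)



abbreviation PP :: "nat \<Rightarrow> nat set set" where "PP m \<equiv> Pow {..<m}"

lemma finite_PP[simp]: "finite (PP m)" by simp

lemma PP_finite: "A \<in> PP m \<Longrightarrow> finite A"
  by (meson PowD finite_lessThan finite_subset)

definition kap :: "nat set \<Rightarrow> nat set \<Rightarrow> nat set \<Rightarrow> real" where
  "kap A B C = (if sym_diff A B = C then csign A B else 0)"

lemma cmult_alt: "cmult m a b C = (\<Sum>A\<in>PP m. \<Sum>B\<in>PP m. kap A B C * a A * b B)"
  unfolding cmult_def kap_def by (intro sum.cong refl) auto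

lemma cmult_clif: "cmult m a b \<in> clif m"
  unfolding clif_def cmult_def by (auto intro!: sum.neutral)

lemma rot3: "(\<Sum>x\<in>S. \<Sum>y\<in>T. \<Sum>z\<in>U. f x y z) = (\<Sum>y\<in>T. \<Sum>z\<in>U. \<Sum>x\<in>S. (f x y z::real))"
proof -
  have "(\<Sum>x\<in>S. \<Sum>y\<in>T. \<Sum>z\<in>U. f x y z) = (\<Sum>y\<in>T. \<Sum>x\<in>S. \<Sum>z\<in>U. f x y z)"
    by (rule sum.swap)
  also have "\<dots> = (\<Sum>y\<in>T. \<Sum>z\<in>U. \<Sum>x\<in>S. f x y z)"
    by (rule sum.cong[OF refl], rule sum.swap)
  finally show ?thesis .
qed

lemma rot4: "(\<Sum>x\<in>S. \<Sum>y\<in>T. \<Sum>z\<in>U. \<Sum>w\<in>V. f x y z w) = (\<Sum>y\<in>T. \<Sum>z\<in>U. \<Sum>w\<in>V. \<Sum>x\<in>S. (f x y z w::real))"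
proof -
  have "(\<Sum>x\<in>S. \<Sum>y\<in>T. \<Sum>z\<in>U. \<Sum>w\<in>V. f x y z w) = (\<Sum>y\<in>T. \<Sum>x\<in>S. \<Sum>z\<in>U. \<Sum>w\<in>V. f x y z w)"
    by (rule sum.swap)
  also have "\<dots> = (\<Sum>y\<in>T. \<Sum>z\<in>U. \<Sum>w\<in>V. \<Sum>x\<in>S. f x y z w)"
    by (rule sum.cong[OF refl], rule rot3)
  finally show ?thesis .
qed

lemma kap_sum:
  assumes "A \<in> PP m" "B \<in> PP m"
  shows "(\<Sum>E\<in>PP m. kap A B E * f E) = csign A B * f (sym_diff A B)"
proof -
  have "(\<Sum>E\<in>PP m. kap A B E * f E) = (\<Sum>E\<in>PP m. if sym_diff A B = E then csign A B * f E else 0)"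
    unfolding kap_def by (intro sum.cong) auto
  also have "\<dots> = csign A B * f (sym_diff A B)"
    using assms by (subst sum.delta') auto
  finally show ?thesis .
qed

lemma cmult_assoc: "cmult m (cmult m a b) c = cmult m a (cmult m b c)"
proof
  fix D
  have L: "cmult m (cmult m a b) c D = (\<Sum>A\<in>PP m. \<Sum>B\<in>PP m. \<Sum>C\<in>PP m.
      kap A B (sym_diff A B) * kap (sym_diff A B) C D * a A * b B * c C)"
  proof -
    have "cmult m (cmult m a b) c D = (\<Sum>E\<in>PP m. \<Sum>C\<in>PP m. \<Sum>A\<in>PP m. \<Sum>B\<in>PP m.
        kap A B E * kap E C D * a A * b B * c C)"
      unfolding cmult_alt by (simp add: sum_distrib_left sum_distrib_right algebra_simps)
    also have "\<dots> = (\<Sum>C\<in>PP m. \<Sum>A\<in>PP m. \<Sum>B\<in>PP m. \<Sum>E\<in>PP m.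
        kap A B E * kap E C D * a A * b B * c C)"
      by (rule rot4)
    also have "\<dots> = (\<Sum>A\<in>PP m. \<Sum>B\<in>PP m. \<Sum>C\<in>PP m. \<Sum>E\<in>PP m.
        kap A B E * kap E C D * a A * b B * c C)"
      by (rule rot3)
    also have "\<dots> = (\<Sum>A\<in>PP m. \<Sum>B\<in>PP m. \<Sum>C\<in>PP m. \<Sum>E\<in>PP m.
        kap A B E * (kap E C D * a A * b B * c C))"
      by (simp add: algebra_simps)
    also have "\<dots> = (\<Sum>A\<in>PP m. \<Sum>B\<in>PP m. \<Sum>C\<in>PP m.
      kap A B (sym_diff A B) * kap (sym_diff A B) C D * a A * b B * c C)"
      apply (intro sum.cong refl) apply (subst kap_sum) apply assumption+
      by (simp add: kap_def)
    finally show ?thesis .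
  qed
  have R: "cmult m a (cmult m b c) D = (\<Sum>A\<in>PP m. \<Sum>B\<in>PP m. \<Sum>C\<in>PP m.
      kap B C (sym_diff B C) * kap A (sym_diff B C) D * a A * b B * c C)"
  proof -
    have "cmult m a (cmult m b c) D = (\<Sum>A\<in>PP m. \<Sum>E\<in>PP m. \<Sum>B\<in>PP m. \<Sum>C\<in>PP m.
        kap B C E * kap A E D * a A * b B * c C)"
      unfolding cmult_alt by (simp add: sum_distrib_left sum_distrib_right algebra_simps)
    also have "\<dots> = (\<Sum>A\<in>PP m. \<Sum>B\<in>PP m. \<Sum>C\<in>PP m. \<Sum>E\<in>PP m.
        kap B C E * kap A E D * a A * b B * c C)"
      by (rule sum.cong[OF refl], rule rot3)
    also have "\<dots> = (\<Sum>A\<in>PP m. \<Sum>B\<in>PP m. \<Sum>C\<in>PP m. \<Sum>E\<in>PP m.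
        kap B C E * (kap A E D * a A * b B * c C))"
      by (simp add: algebra_simps)
    also have "\<dots> = (\<Sum>A\<in>PP m. \<Sum>B\<in>PP m. \<Sum>C\<in>PP m.
      kap B C (sym_diff B C) * kap A (sym_diff B C) D * a A * b B * c C)"
      apply (intro sum.cong refl) apply (subst kap_sum) apply assumption+
      by (simp add: kap_def)
    finally show ?thesis .
  qed
  have "\<And>A B C. A \<in> PP m \<Longrightarrow> B \<in> PP m \<Longrightarrow> C \<in> PP m \<Longrightarrow>
     kap A B (sym_diff A B) * kap (sym_diff A B) C D = kap B C (sym_diff B C) * kap A (sym_diff B C) D"
  proof -
    fix A B C assume h: "A \<in> PP m" "B \<in> PP m" "C \<in> PP m"
    have fin: "finite A" "finite B" "finite C" using h PP_finite by auto
    have s: "sym_diff (sym_diff A B) C = sym_diff A (sym_diff B C)" by blast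
    show "kap A B (sym_diff A B) * kap (sym_diff A B) C D = kap B C (sym_diff B C) * kap A (sym_diff B C) D"
      unfolding kap_def s using cocycle[OF fin] by (simp add: mult.commute)
  qed
  then show "cmult m (cmult m a b) c D = cmult m a (cmult m b c) D"
    unfolding L R by (intro sum.cong refl) simp
qed


lemma cmult_sum_left: "finite I \<Longrightarrow> cmult m (\<lambda>C. \<Sum>i\<in>I. f i C) b D = (\<Sum>i\<in>I. cmult m (f i) b D)"
  unfolding cmult_alt by (simp add: sum_distrib_left sum_distrib_right algebra_simps sum.swap[of _ I])

lemma cmult_sum_right: "finite I \<Longrightarrow> cmult m a (\<lambda>C. \<Sum>i\<in>I. f i C) D = (\<Sum>i\<in>I. cmult m a (f i) D)"
  unfolding cmult_alt by (simp add: sum_distrib_left sum_distrib_right algebra_simps sum.swap[of _ I])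

lemma cmult_add_left: "cmult m (\<lambda>C. a C + a' C) b D = cmult m a b D + cmult m a' b D"
  unfolding cmult_alt by (simp add: sum.distrib algebra_simps)

lemma cmult_add_right: "cmult m a (\<lambda>C. b C + b' C) D = cmult m a b D + cmult m a b' D"
  unfolding cmult_alt by (simp add: sum.distrib algebra_simps)

lemma cmult_scale_left: "cmult m (\<lambda>C. r * a C) b D = r * cmult m a b D"
  unfolding cmult_alt by (simp add: sum_distrib_left algebra_simps)

lemma cmult_scale_right: "cmult m a (\<lambda>C. r * b C) D = r * cmult m a b D"
  unfolding cmult_alt by (simp add: sum_distrib_left algebra_simps)

lemma cmult_zero_left[simp]: "cmult m (\<lambda>C. 0) b D = 0"
  unfolding cmult_alt by simp

lemma cmult_zero_right[simp]: "cmult m a (\<lambda>C. 0) D = 0"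
  unfolding cmult_alt by simp

lemma cmult_cong: "(\<And>A. A \<in> PP m \<Longrightarrow> a A = a' A) \<Longrightarrow> (\<And>A. A \<in> PP m \<Longrightarrow> b A = b' A) \<Longrightarrow>
   cmult m a b D = cmult m a' b' D"
  unfolding cmult_alt by (intro sum.cong refl) auto

lemma csign_single: "csign {i} {i} = -1"
proof -
  have e: "{(a, b). a \<in> {i} \<and> b \<in> {i} \<and> b < a} = {}" by auto
  show ?thesis unfolding csign_def by (simp only: e) simp
qed

lemma symdiff_invol[simp]: "sym_diff {i} (sym_diff {i} D) = D" "sym_diff (sym_diff D {i}) {i} = D"
   "sym_diff (sym_diff {i} D) {i} = D" "sym_diff {i} (sym_diff D {i}) = D"
  by auto

lemma PP_symdiff: "i < m \<Longrightarrow> sym_diff {i} C \<in> PP m \<longleftrightarrow> C \<in> PP m"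
  by auto

lemma PP_symdiff': "i < m \<Longrightarrow> sym_diff C {i} \<in> PP m \<longleftrightarrow> C \<in> PP m"
  by auto

lemma cmult_blade_left:
  assumes "i < m"
  shows "cmult m (blade {i}) a C = (if C \<in> PP m then csign {i} (sym_diff {i} C) * a (sym_diff {i} C) else 0)"
proof -
  have "cmult m (blade {i}) a C = (\<Sum>A\<in>PP m. if A = {i} then (\<Sum>B\<in>PP m. kap A B C * a B) else 0)"
    unfolding cmult_alt blade_def by (intro sum.cong refl) (auto simp: sum_distrib_left)
  also have "\<dots> = (\<Sum>B\<in>PP m. kap {i} B C * a B)"
    using assms by (subst sum.delta) auto
  also have "\<dots> = (\<Sum>B\<in>PP m. if B = sym_diff {i} C then csign {i} B * a B else 0)"
    unfolding kap_def by (intro sum.cong refl) auto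
  also have "\<dots> = (if C \<in> PP m then csign {i} (sym_diff {i} C) * a (sym_diff {i} C) else 0)"
    using PP_symdiff[OF assms, of C] by (subst sum.delta) auto
  finally show ?thesis .
qed

lemma cmult_blade_right:
  assumes "j < m"
  shows "cmult m a (blade {j}) C = (if C \<in> PP m then csign (sym_diff C {j}) {j} * a (sym_diff C {j}) else 0)"
proof -
  have "cmult m a (blade {j}) C = (\<Sum>A\<in>PP m. \<Sum>B\<in>PP m. if B = {j} then kap A B C * a A else 0)"
    unfolding cmult_alt blade_def by (intro sum.cong refl) auto
  also have "\<dots> = (\<Sum>A\<in>PP m. kap A {j} C * a A)"
    using assms by (intro sum.cong refl) (subst sum.delta, auto)
  also have "\<dots> = (\<Sum>A\<in>PP m. if A = sym_diff C {j} then csign A {j} * a A else 0)"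
    unfolding kap_def by (intro sum.cong refl) auto
  also have "\<dots> = (if C \<in> PP m then csign (sym_diff C {j}) {j} * a (sym_diff C {j}) else 0)"
    using PP_symdiff'[OF assms, of C] by (subst sum.delta) auto
  finally show ?thesis .
qed

definition cip :: "nat \<Rightarrow> cliff \<Rightarrow> cliff \<Rightarrow> real" where
  "cip m a b = (\<Sum>C\<in>PP m. a C * b C)"

lemma csign_flip_left: "finite D \<Longrightarrow> csign {i} (sym_diff {i} D) = - csign {i} D"
  using csign_symdiff_right[of "{i}" "{i}" D] by (simp add: csign_single)

lemma csign_flip_right: "finite D \<Longrightarrow> csign (sym_diff D {j}) {j} = - csign D {j}"
  using csign_symdiff_left[of D "{j}" "{j}"] by (simp add: csign_single)

lemma cip_left:
  assumes "i < m"
  shows "cip m (cmult m (blade {i}) a) b = - cip m a (cmult m (blade {i}) b)"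
proof -
  have "cip m (cmult m (blade {i}) a) b = (\<Sum>C\<in>PP m. csign {i} (sym_diff {i} C) * a (sym_diff {i} C) * b C)"
    unfolding cip_def cmult_blade_left[OF assms] by (intro sum.cong refl) auto
  also have "\<dots> = (\<Sum>D\<in>PP m. csign {i} D * a D * b (sym_diff {i} D))"
    by (rule sum.reindex_bij_witness[where i="\<lambda>D. sym_diff {i} D" and j="\<lambda>D. sym_diff {i} D"])
       (use assms in auto)
  also have "\<dots> = - cip m a (cmult m (blade {i}) b)"
    unfolding cip_def cmult_blade_left[OF assms]
    by (auto simp: sum_negf[symmetric] PP_symdiff[OF assms] csign_flip_left PP_finite intro!: sum.cong)
  finally show ?thesis .
qed

lemma cip_right:
  assumes "j < m"
  shows "cip m (cmult m a (blade {j})) b = - cip m a (cmult m b (blade {j}))"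
proof -
  have "cip m (cmult m a (blade {j})) b = (\<Sum>C\<in>PP m. csign (sym_diff C {j}) {j} * a (sym_diff C {j}) * b C)"
    unfolding cip_def cmult_blade_right[OF assms] by (intro sum.cong refl) auto
  also have "\<dots> = (\<Sum>D\<in>PP m. csign D {j} * a D * b (sym_diff D {j}))"
    by (rule sum.reindex_bij_witness[where i="\<lambda>D. sym_diff D {j}" and j="\<lambda>D. sym_diff D {j}"])
       (use assms in auto)
  also have "\<dots> = - cip m a (cmult m b (blade {j}))"
    unfolding cip_def cmult_blade_right[OF assms]
    by (auto simp: sum_negf[symmetric] PP_symdiff'[OF assms] csign_flip_right PP_finite intro!: sum.cong)
  finally show ?thesis .
qed

lemma blade_sandwich_zero:
  assumes "i < m" "a \<in> clif m" "\<And>C. cmult m (blade {i}) (cmult m a (blade {i})) C = 0"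
  shows "a = (\<lambda>C. 0)"
proof
  fix C
  show "a C = 0"
  proof (cases "C \<in> PP m")
    case True
    have "0 = cmult m (blade {i}) (cmult m a (blade {i})) C" using assms(3) by simp
    also have "\<dots> = csign {i} (sym_diff {i} C) * (csign C {i} * a C)"
      using True assms(1) by (auto simp add: cmult_blade_left[OF assms(1)] cmult_blade_right[OF assms(1)])
    finally have "0 = (csign {i} (sym_diff {i} C) * csign C {i}) * a C" by simp
    moreover have "csign {i} (sym_diff {i} C) \<noteq> 0" "csign C {i} \<noteq> 0" unfolding csign_def by auto
    ultimately show ?thesis by simp
  next
    case False then show ?thesis using assms(2) unfolding clif_def by auto
  qed
qed


definition Idx :: "nat \<Rightarrow> (nat \<Rightarrow> nat) \<Rightarrow> (nat \<Rightarrow> nat) set" where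
  "Idx m \<gamma> = {\<alpha>. \<forall>i. \<alpha> i \<le> \<gamma> i \<and> (m \<le> i \<longrightarrow> \<alpha> i = 0)}"

lemma pmult_Idx: "pmult m p q \<gamma> C = (\<Sum>\<alpha>\<in>Idx m \<gamma>. cmult m (p \<alpha>) (q (\<lambda>i. \<gamma> i - \<alpha> i)) C)"
  unfolding pmult_def Idx_def by simp

lemma finite_bounded_funs: "finite {\<alpha>::nat\<Rightarrow>nat. \<forall>i. \<alpha> i \<le> M \<and> (m \<le> i \<longrightarrow> \<alpha> i = 0)}"
proof -
  have "{\<alpha>::nat\<Rightarrow>nat. \<forall>i. \<alpha> i \<le> M \<and> (m \<le> i \<longrightarrow> \<alpha> i = 0)} \<subseteq>
        {f. \<forall>x. (x \<in> {..<m} \<longrightarrow> f x \<in> {..M}) \<and> (x \<notin> {..<m} \<longrightarrow> f x = 0)}" by auto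
  then show ?thesis by (rule finite_subset) (rule finite_set_of_finite_funs, auto)
qed

lemma finite_Idx[simp]: "finite (Idx m \<gamma>)"
proof -
  have "Idx m \<gamma> \<subseteq> {\<alpha>. \<forall>i. \<alpha> i \<le> (\<Sum>j<m. \<gamma> j) \<and> (m \<le> i \<longrightarrow> \<alpha> i = 0)}"
  proof
    fix \<alpha> assume a: "\<alpha> \<in> Idx m \<gamma>"
    { fix i
      have "\<alpha> i \<le> (\<Sum>j<m. \<gamma> j)"
      proof (cases "i < m")
        case True
        then have "\<gamma> i \<le> (\<Sum>j<m. \<gamma> j)" by (intro member_le_sum) auto
        moreover have "\<alpha> i \<le> \<gamma> i" using a unfolding Idx_def by auto
        ultimately show ?thesis by linarith
      next
        case False then show ?thesis using a unfolding Idx_def by auto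
      qed }
    then show "\<alpha> \<in> {\<alpha>. \<forall>i. \<alpha> i \<le> (\<Sum>j<m. \<gamma> j) \<and> (m \<le> i \<longrightarrow> \<alpha> i = 0)}"
      using a unfolding Idx_def by auto
  qed
  then show ?thesis by (rule finite_subset) (rule finite_bounded_funs)
qed

lemma finite_mons[simp]: "finite (mons m k)"
proof -
  have "mons m k \<subseteq> {\<alpha>. \<forall>i. \<alpha> i \<le> k \<and> (m \<le> i \<longrightarrow> \<alpha> i = 0)}"
  proof
    fix \<alpha> assume a: "\<alpha> \<in> mons m k"
    { fix i
      have "\<alpha> i \<le> k"
      proof (cases "i < m")
        case True
        then have "\<alpha> i \<le> (\<Sum>j<m. \<alpha> j)" by (intro member_le_sum) auto
        then show ?thesis using a unfolding mons_def by auto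
      next
        case False then show ?thesis using a unfolding mons_def by auto
      qed }
    then show "\<alpha> \<in> {\<alpha>. \<forall>i. \<alpha> i \<le> k \<and> (m \<le> i \<longrightarrow> \<alpha> i = 0)}"
      using a unfolding mons_def by auto
  qed
  then show ?thesis by (rule finite_subset) (rule finite_bounded_funs)
qed

definition valid :: "nat \<Rightarrow> cpoly \<Rightarrow> bool" where
  "valid m p \<longleftrightarrow> (\<forall>\<alpha>. \<not> (\<forall>i. m \<le> i \<longrightarrow> \<alpha> i = 0) \<longrightarrow> p \<alpha> = (\<lambda>C. 0)) \<and> (\<forall>\<alpha>. p \<alpha> \<in> clif m)"

lemma hpoly_valid: "p \<in> hpoly m k \<Longrightarrow> valid m p"
  unfolding hpoly_def valid_def mons_def by auto

lemma clif_sum: "finite I \<Longrightarrow> (\<And>i. i \<in> I \<Longrightarrow> f i \<in> clif m) \<Longrightarrow> (\<lambda>C. \<Sum>i\<in>I. f i C) \<in> clif m"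
  unfolding clif_def by (auto intro!: sum.neutral)

lemma pmult_clif: "pmult m p q \<gamma> \<in> clif m"
  unfolding pmult_Idx[abs_def] by (rule clif_sum) (auto intro: cmult_clif)

lemma pmult_hpoly:
  assumes p: "p \<in> hpoly m a" and q: "q \<in> hpoly m b"
  shows "pmult m p q \<in> hpoly m (a + b)"
  unfolding hpoly_def
proof (intro CollectI conjI allI impI)
  fix \<gamma> show "pmult m p q \<gamma> \<in> clif m" by (rule pmult_clif)
next
  fix \<gamma> assume g: "\<gamma> \<notin> mons m (a + b)"
  show "pmult m p q \<gamma> = (\<lambda>C. 0)"
  proof
    fix C
    have "\<And>\<alpha>. \<alpha> \<in> Idx m \<gamma> \<Longrightarrow> cmult m (p \<alpha>) (q (\<lambda>i. \<gamma> i - \<alpha> i)) C = 0"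
    proof -
      fix \<alpha> assume al: "\<alpha> \<in> Idx m \<gamma>"
      show "cmult m (p \<alpha>) (q (\<lambda>i. \<gamma> i - \<alpha> i)) C = 0"
      proof (cases "\<alpha> \<in> mons m a")
        case False then have "p \<alpha> = (\<lambda>C. 0)" using p unfolding hpoly_def by auto
        then show ?thesis by simp
      next
        case True
        have "(\<lambda>i. \<gamma> i - \<alpha> i) \<notin> mons m b"
        proof
          assume b: "(\<lambda>i. \<gamma> i - \<alpha> i) \<in> mons m b"
          have "\<forall>i. m \<le> i \<longrightarrow> \<gamma> i = 0"
          proof (intro allI impI)
            fix i assume "m \<le> i"
            then have "\<alpha> i = 0" "\<gamma> i - \<alpha> i = 0" using True b unfolding mons_def by auto
            then show "\<gamma> i = 0" by simp
          qed
          moreover have "(\<Sum>i<m. \<gamma> i) = (\<Sum>i<m. \<alpha> i) + (\<Sum>i<m. \<gamma> i - \<alpha> i)"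
            using al unfolding Idx_def by (simp flip: sum.distrib)
          then have "(\<Sum>i<m. \<gamma> i) = a + b" using True b unfolding mons_def by simp
          ultimately show False using g unfolding mons_def by auto
        qed
        then have "q (\<lambda>i. \<gamma> i - \<alpha> i) = (\<lambda>C. 0)" using q unfolding hpoly_def by auto
        then show ?thesis by simp
      qed
    qed
    then show "pmult m p q \<gamma> C = 0" unfolding pmult_Idx by (simp add: sum.neutral)
  qed
qed


lemma pmult_lam: "pmult m p q \<gamma> = (\<lambda>C. \<Sum>\<alpha>\<in>Idx m \<gamma>. cmult m (p \<alpha>) (q (\<lambda>i. \<gamma> i - \<alpha> i)) C)"
  by (rule ext) (rule pmult_Idx)

lemma Idx_add_diff: "b \<in> Idx m a \<Longrightarrow> b i + (a i - b i) = a i"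
  unfolding Idx_def by auto

lemma pmult_assoc: "pmult m (pmult m p q) r = pmult m p (pmult m q r)"
proof (intro ext)
  fix \<gamma> C
  have "pmult m (pmult m p q) r \<gamma> C = (\<Sum>\<alpha>\<in>Idx m \<gamma>. \<Sum>\<beta>\<in>Idx m \<alpha>.
      cmult m (cmult m (p \<beta>) (q (\<lambda>i. \<alpha> i - \<beta> i))) (r (\<lambda>i. \<gamma> i - \<alpha> i)) C)"
    unfolding pmult_Idx[of m "pmult m p q"] pmult_lam[of m p q] by (simp add: cmult_sum_left)
  also have "\<dots> = (\<Sum>(\<alpha>,\<beta>)\<in>Sigma (Idx m \<gamma>) (Idx m).
      cmult m (cmult m (p \<beta>) (q (\<lambda>i. \<alpha> i - \<beta> i))) (r (\<lambda>i. \<gamma> i - \<alpha> i)) C)"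
    by (rule sum.Sigma) auto
  also have "\<dots> = (\<Sum>(\<beta>,\<delta>)\<in>Sigma (Idx m \<gamma>) (\<lambda>\<beta>. Idx m (\<lambda>i. \<gamma> i - \<beta> i)).
      cmult m (p \<beta>) (cmult m (q \<delta>) (r (\<lambda>i. (\<gamma> i - \<beta> i) - \<delta> i))) C)"
  proof (rule sum.reindex_bij_witness[where i="\<lambda>(\<beta>,\<delta>). (\<lambda>i. \<beta> i + \<delta> i, \<beta>)"
        and j="\<lambda>(\<alpha>,\<beta>). (\<beta>, \<lambda>i. \<alpha> i - \<beta> i)"])
    fix a assume "a \<in> Sigma (Idx m \<gamma>) (Idx m)"
    then show "(case case a of (\<alpha>, \<beta>) \<Rightarrow> (\<beta>, \<lambda>i. \<alpha> i - \<beta> i) of (\<beta>, \<delta>) \<Rightarrow> (\<lambda>i. \<beta> i + \<delta> i, \<beta>)) = a"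
      unfolding Idx_def by (auto simp: fun_eq_iff)
  next
    fix a assume "a \<in> Sigma (Idx m \<gamma>) (Idx m)"
    then show "(case a of (\<alpha>, \<beta>) \<Rightarrow> (\<beta>, \<lambda>i. \<alpha> i - \<beta> i)) \<in> Sigma (Idx m \<gamma>) (\<lambda>\<beta>. Idx m (\<lambda>i. \<gamma> i - \<beta> i))"
      unfolding Idx_def by (auto simp: le_diff_conv2 intro: order_trans diff_le_mono)
  next
    fix b assume "b \<in> Sigma (Idx m \<gamma>) (\<lambda>\<beta>. Idx m (\<lambda>i. \<gamma> i - \<beta> i))"
    then show "(case case b of (\<beta>, \<delta>) \<Rightarrow> (\<lambda>i. \<beta> i + \<delta> i, \<beta>) of (\<alpha>, \<beta>) \<Rightarrow> (\<beta>, \<lambda>i. \<alpha> i - \<beta> i)) = b"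
      by (auto simp: fun_eq_iff)
  next
    fix b assume "b \<in> Sigma (Idx m \<gamma>) (\<lambda>\<beta>. Idx m (\<lambda>i. \<gamma> i - \<beta> i))"
    then show "(case b of (\<beta>, \<delta>) \<Rightarrow> (\<lambda>i. \<beta> i + \<delta> i, \<beta>)) \<in> Sigma (Idx m \<gamma>) (Idx m)"
      unfolding Idx_def by (auto simp: le_diff_conv2 add.commute)
  qed (auto simp: cmult_assoc diff_diff_add Idx_add_diff)
  also have "\<dots> = (\<Sum>\<beta>\<in>Idx m \<gamma>. \<Sum>\<delta>\<in>Idx m (\<lambda>i. \<gamma> i - \<beta> i).
      cmult m (p \<beta>) (cmult m (q \<delta>) (r (\<lambda>i. (\<gamma> i - \<beta> i) - \<delta> i))) C)"
    by (rule sum.Sigma[symmetric]) auto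
  also have "\<dots> = pmult m p (pmult m q r) \<gamma> C"
    unfolding pmult_Idx[of m p] pmult_lam[of m q r] by (simp add: cmult_sum_right)
  finally show "pmult m (pmult m p q) r \<gamma> C = pmult m p (pmult m q r) \<gamma> C" .
qed


lemma pmult_sum_left: "finite S \<Longrightarrow> pmult m (\<lambda>\<alpha> C. \<Sum>s\<in>S. Q s \<alpha> C) r = (\<lambda>\<gamma> C. \<Sum>s\<in>S. pmult m (Q s) r \<gamma> C)"
  unfolding pmult_Idx[abs_def] by (simp add: cmult_sum_left sum.swap[of _ S])

lemma pmult_sum_right: "finite S \<Longrightarrow> pmult m r (\<lambda>\<alpha> C. \<Sum>s\<in>S. Q s \<alpha> C) = (\<lambda>\<gamma> C. \<Sum>s\<in>S. pmult m r (Q s) \<gamma> C)"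
  unfolding pmult_Idx[abs_def] by (simp add: cmult_sum_right sum.swap[of _ S])

lemma pmult_add_left: "pmult m (\<lambda>\<alpha> C. p \<alpha> C + p' \<alpha> C) r \<gamma> C = pmult m p r \<gamma> C + pmult m p' r \<gamma> C"
  unfolding pmult_Idx by (simp add: cmult_add_left sum.distrib)

lemma pmult_add_right: "pmult m r (\<lambda>\<alpha> C. p \<alpha> C + p' \<alpha> C) \<gamma> C = pmult m r p \<gamma> C + pmult m r p' \<gamma> C"
  unfolding pmult_Idx by (simp add: cmult_add_right sum.distrib)

lemma pmult_scale_left: "pmult m (\<lambda>\<alpha> C. c * p \<alpha> C) r \<gamma> C = c * pmult m p r \<gamma> C"
  unfolding pmult_Idx by (simp add: cmult_scale_left sum_distrib_left)

lemma pmult_scale_right: "pmult m r (\<lambda>\<alpha> C. c * p \<alpha> C) \<gamma> C = c * pmult m r p \<gamma> C"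
  unfolding pmult_Idx by (simp add: cmult_scale_right sum_distrib_left)

lemma pmult_zero_left[simp]: "pmult m (\<lambda>\<alpha> C. 0) r = (\<lambda>\<gamma> C. 0)"
  unfolding pmult_Idx[abs_def] by simp

lemma pmult_zero_right[simp]: "pmult m r (\<lambda>\<alpha> C. 0) = (\<lambda>\<gamma> C. 0)"
  unfolding pmult_Idx[abs_def] by simp

lemma cmult_one_left: "cmult m (blade {}) b C = (if C \<in> PP m then b C else 0)"
proof -
  have "cmult m (blade {}) b C = (\<Sum>A\<in>PP m. if A = {} then (\<Sum>B\<in>PP m. kap A B C * b B) else 0)"
    unfolding cmult_alt blade_def by (intro sum.cong refl) (auto simp: sum_distrib_left)
  also have "\<dots> = (\<Sum>B\<in>PP m. kap {} B C * b B)" by (subst sum.delta) auto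
  also have "\<dots> = (\<Sum>B\<in>PP m. if B = C then b B else 0)"
    unfolding kap_def csign_def by (intro sum.cong refl) auto
  also have "\<dots> = (if C \<in> PP m then b C else 0)" by (subst sum.delta) auto
  finally show ?thesis .
qed

lemma cmult_one_right: "cmult m a (blade {}) C = (if C \<in> PP m then a C else 0)"
proof -
  have "cmult m a (blade {}) C = (\<Sum>A\<in>PP m. \<Sum>B\<in>PP m. if B = {} then kap A B C * a A else 0)"
    unfolding cmult_alt blade_def by (intro sum.cong refl) auto
  also have "\<dots> = (\<Sum>A\<in>PP m. kap A {} C * a A)" by (intro sum.cong refl) (subst sum.delta, auto)
  also have "\<dots> = (\<Sum>A\<in>PP m. if A = C then a A else 0)"
    unfolding kap_def csign_def by (intro sum.cong refl) auto
  also have "\<dots> = (if C \<in> PP m then a C else 0)" by (subst sum.delta) auto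
  finally show ?thesis .
qed

lemma pone_eq: "pone \<alpha> = (if \<alpha> = (\<lambda>i. 0) then blade {} else (\<lambda>C. 0))"
  unfolding pone_def blade_def by (auto simp: fun_eq_iff)

lemma clif_eq: "a \<in> clif m \<Longrightarrow> (if C \<in> PP m then a C else 0) = a C"
  unfolding clif_def by auto

lemma pmult_pone_left: "valid m p \<Longrightarrow> pmult m pone p = p"
proof (intro ext)
  fix \<gamma> C assume v: "valid m p"
  have "pmult m pone p \<gamma> C = (\<Sum>\<alpha>\<in>Idx m \<gamma>. if \<alpha> = (\<lambda>i. 0) then cmult m (blade {}) (p (\<lambda>i. \<gamma> i - \<alpha> i)) C else 0)"
    unfolding pmult_Idx pone_eq by (intro sum.cong refl) auto
  also have "\<dots> = cmult m (blade {}) (p \<gamma>) C"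
  proof -
    have "(\<lambda>i. 0) \<in> Idx m \<gamma>" by (simp add: Idx_def)
    then show ?thesis by (subst sum.delta) simp_all
  qed
  also have "\<dots> = p \<gamma> C" using v unfolding valid_def clif_def by (auto simp add: cmult_one_left)
  finally show "pmult m pone p \<gamma> C = p \<gamma> C" .
qed

lemma pmult_pone_right: "valid m p \<Longrightarrow> pmult m p pone = p"
proof (intro ext)
  fix \<gamma> C assume v: "valid m p"
  have "pmult m p pone \<gamma> C = (\<Sum>\<alpha>\<in>Idx m \<gamma>. if \<alpha> = \<gamma> then cmult m (p \<alpha>) (blade {}) C else 0)"
    unfolding pmult_Idx pone_eq by (intro sum.cong refl) (auto simp: fun_eq_iff Idx_def le_antisym)
  also have "\<dots> = (if \<gamma> \<in> Idx m \<gamma> then cmult m (p \<gamma>) (blade {}) C else 0)"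
    by (subst sum.delta) auto
  also have "\<dots> = p \<gamma> C"
  proof (cases "\<gamma> \<in> Idx m \<gamma>")
    case True then show ?thesis using v unfolding valid_def clif_def by (auto simp add: cmult_one_right)
  next
    case False then have "p \<gamma> = (\<lambda>C. 0)" using v unfolding valid_def Idx_def by auto
    then show ?thesis using False by simp
  qed
  finally show "pmult m p pone \<gamma> C = p \<gamma> C" .
qed

lemma blade_clif: "i < m \<Longrightarrow> blade {i} \<in> clif m"
  unfolding blade_def clif_def by auto

lemma unitv_mons: "j < m \<Longrightarrow> unitv j \<in> mons m 1"
  unfolding mons_def unitv_def by auto

lemma xvec_hpoly: "xvec m \<in> hpoly m 1"
  unfolding hpoly_def
proof (intro CollectI conjI allI impI)
  fix \<alpha> assume "\<alpha> \<notin> mons m 1"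
  then have "\<And>j. j < m \<Longrightarrow> \<alpha> \<noteq> unitv j" using unitv_mons by blast
  then show "xvec m \<alpha> = (\<lambda>C. 0)" unfolding xvec_def by auto
next
  fix \<alpha> show "xvec m \<alpha> \<in> clif m"
    unfolding xvec_def by (rule clif_sum) (auto simp: clif_def blade_def)
qed

lemma pone_hpoly: "pone \<in> hpoly m 0"
  unfolding hpoly_def mons_def pone_eq by (auto simp: blade_def clif_def)

lemma xpow_0: "xpow m 0 = pone" unfolding xpow_def by simp
lemma xpow_Suc: "xpow m (Suc s) = pmult m (xvec m) (xpow m s)" unfolding xpow_def by simp

lemma xpow_hpoly: "xpow m s \<in> hpoly m s"
  by (induction s) (auto simp: xpow_0 xpow_Suc pone_hpoly dest: pmult_hpoly[OF xvec_hpoly])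

lemma xpow_comm: "pmult m (xvec m) (xpow m s) = pmult m (xpow m s) (xvec m)"
proof (induction s)
  case 0
  show ?case using hpoly_valid[OF xvec_hpoly]
    by (simp add: xpow_0 pmult_pone_left pmult_pone_right)
next
  case (Suc s)
  have "pmult m (xpow m (Suc s)) (xvec m) = pmult m (xvec m) (pmult m (xpow m s) (xvec m))"
    by (simp add: xpow_Suc pmult_assoc)
  also have "\<dots> = pmult m (xvec m) (xpow m (Suc s))" by (simp add: xpow_Suc Suc)
  finally show ?case by simp
qed

lemma sandwich_Suc: "pmult m (pmult m (xpow m (Suc s)) P) (xpow m (Suc s)) =
   pmult m (pmult m (xvec m) (pmult m (pmult m (xpow m s) P) (xpow m s))) (xvec m)"
proof -
  have "pmult m (pmult m (xpow m (Suc s)) P) (xpow m (Suc s)) =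
      pmult m (pmult m (pmult m (xvec m) (xpow m s)) P) (pmult m (xpow m s) (xvec m))"
    by (simp add: xpow_Suc xpow_comm)
  then show ?thesis by (simp add: pmult_assoc)
qed


context vector_space begin

lemma inj_endo_surj:
  assumes fin: "finite B" and sub: "subspace W" and WB: "W \<subseteq> span B"
    and lin: "Vector_Spaces.linear scale scale f" and fW: "f ` W \<subseteq> W" and inj: "inj_on f W"
  shows "W \<subseteq> f ` W"
proof -
  interpret lf: Vector_Spaces.linear scale scale f by fact
  obtain C where C: "C \<subseteq> W" "independent C" "W \<subseteq> span C" "card C = dim W"
    using basis_exists[of W] by blast
  have fC: "finite C" using independent_span_bound[OF fin C(2)] C(1) WB by auto
  have spC: "span C \<subseteq> W" using span_minimal[OF C(1) sub] .
  have injC: "inj_on f (span C)" using inj spC by (rule inj_on_subset)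
  have indf: "independent (f ` C)" using lf.independent_injective_image[OF C(2) injC] .
  have cardf: "card (f ` C) = card C"
    using card_image[OF inj_on_subset[OF injC span_superset]] .
  have "W \<subseteq> span (f ` C)"
  proof
    fix w assume w: "w \<in> W"
    show "w \<in> span (f ` C)"
    proof (rule ccontr)
      assume nw: "w \<notin> span (f ` C)"
      then have wn: "w \<notin> f ` C" using span_superset by blast
      have ind2: "independent (insert w (f ` C))"
        using independent_insert indf nw wn by auto
      have "insert w (f ` C) \<subseteq> span C" using w C(3) fW C(1) spC by auto
      then have "card (insert w (f ` C)) \<le> card C"
        using independent_span_bound[OF fC ind2] by auto
      moreover have "card (insert w (f ` C)) = card C + 1"
        using wn fC cardf by simp
      ultimately show False by simp
    qed
  qed
  also have "span (f ` C) = f ` span C" by (rule lf.span_image)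
  also have "\<dots> \<subseteq> f ` W" using spC by auto
  finally show ?thesis .
qed

end


definition sub1 :: "(nat \<Rightarrow> nat) \<Rightarrow> nat \<Rightarrow> nat \<Rightarrow> nat" where "sub1 \<gamma> j = (\<lambda>l. \<gamma> l - unitv j l)"
definition ad1 :: "(nat \<Rightarrow> nat) \<Rightarrow> nat \<Rightarrow> nat \<Rightarrow> nat" where "ad1 \<gamma> j = (\<lambda>l. \<gamma> l + unitv j l)"

lemma cmult_if_left: "cmult m (\<lambda>C. if P then a C else 0) b D = (if P then cmult m a b D else 0)"
  by (cases P) simp_all

lemma cmult_if_right: "cmult m a (\<lambda>C. if P then b C else 0) D = (if P then cmult m a b D else 0)"
  by (cases P) simp_all

lemma cmult_xvec_left: "cmult m (xvec m \<alpha>) b D = (\<Sum>i<m. if \<alpha> = unitv i then cmult m (blade {i}) b D else 0)"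
  unfolding xvec_def by (simp add: cmult_sum_left cmult_if_left)

lemma cmult_xvec_right: "cmult m a (xvec m \<alpha>) D = (\<Sum>i<m. if \<alpha> = unitv i then cmult m a (blade {i}) D else 0)"
  unfolding xvec_def by (simp add: cmult_sum_right cmult_if_right)

lemma unitv_Idx: "i < m \<Longrightarrow> unitv i \<in> Idx m \<gamma> \<longleftrightarrow> 1 \<le> \<gamma> i"
  unfolding Idx_def unitv_def by auto

lemma xvec_left:
  "pmult m (xvec m) R \<gamma> C = (\<Sum>i<m. if 1 \<le> \<gamma> i then cmult m (blade {i}) (R (sub1 \<gamma> i)) C else 0)"
proof -
  have "pmult m (xvec m) R \<gamma> C = (\<Sum>\<alpha>\<in>Idx m \<gamma>. \<Sum>i<m. if \<alpha> = unitv i then cmult m (blade {i}) (R (\<lambda>l. \<gamma> l - \<alpha> l)) C else 0)"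
    unfolding pmult_Idx cmult_xvec_left ..
  also have "\<dots> = (\<Sum>i<m. \<Sum>\<alpha>\<in>Idx m \<gamma>. if \<alpha> = unitv i then cmult m (blade {i}) (R (\<lambda>l. \<gamma> l - \<alpha> l)) C else 0)"
    by (rule sum.swap)
  also have "\<dots> = (\<Sum>i<m. if 1 \<le> \<gamma> i then cmult m (blade {i}) (R (sub1 \<gamma> i)) C else 0)"
    by (intro sum.cong refl) (simp add: sum.delta unitv_Idx sub1_def)
  finally show ?thesis .
qed

lemma pmult_valid: "valid m q \<Longrightarrow> valid m (pmult m p q)"
  unfolding valid_def
proof (intro conjI allI impI)
  fix \<gamma> :: "nat \<Rightarrow> nat" assume v: "(\<forall>\<alpha>. \<not> (\<forall>i. m \<le> i \<longrightarrow> \<alpha> i = 0) \<longrightarrow> q \<alpha> = (\<lambda>C. 0)) \<and> (\<forall>\<alpha>. q \<alpha> \<in> clif m)"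
    and g: "\<not> (\<forall>i. m \<le> i \<longrightarrow> \<gamma> i = 0)"
  show "pmult m p q \<gamma> = (\<lambda>C. 0)"
  proof
    fix C
    have "\<And>\<alpha>. \<alpha> \<in> Idx m \<gamma> \<Longrightarrow> q (\<lambda>l. \<gamma> l - \<alpha> l) = (\<lambda>C. 0)"
    proof -
      fix \<alpha> assume a: "\<alpha> \<in> Idx m \<gamma>"
      from g obtain i where i: "m \<le> i" "\<gamma> i \<noteq> 0" by auto
      with a have "\<alpha> i = 0" unfolding Idx_def by auto
      with i have X: "\<not> (\<forall>i. m \<le> i \<longrightarrow> (\<lambda>l. \<gamma> l - \<alpha> l) i = 0)" by auto
      have H: "\<forall>\<alpha>. \<not> (\<forall>i. m \<le> i \<longrightarrow> \<alpha> i = 0) \<longrightarrow> q \<alpha> = (\<lambda>C. 0)" using v by (rule conjunct1)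
      show "q (\<lambda>l. \<gamma> l - \<alpha> l) = (\<lambda>C. 0)" using H[rule_format, of "\<lambda>l. \<gamma> l - \<alpha> l", OF X] .
    qed
    then show "pmult m p q \<gamma> C = 0" unfolding pmult_Idx by simp
  qed
qed (rule pmult_clif)

lemma nat_sub_eq: "(a::nat) \<le> b \<Longrightarrow> (b - a = u) = (a = b - u \<and> u \<le> b)" by arith

lemma xvec_right:
  assumes v: "valid m R"
  shows "pmult m R (xvec m) \<gamma> C = (\<Sum>j<m. if 1 \<le> \<gamma> j then cmult m (R (sub1 \<gamma> j)) (blade {j}) C else 0)"
proof -
  have "pmult m R (xvec m) \<gamma> C = (\<Sum>\<alpha>\<in>Idx m \<gamma>. \<Sum>j<m. if (\<lambda>l. \<gamma> l - \<alpha> l) = unitv j then cmult m (R \<alpha>) (blade {j}) C else 0)"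
    unfolding pmult_Idx cmult_xvec_right ..
  also have "\<dots> = (\<Sum>j<m. \<Sum>\<alpha>\<in>Idx m \<gamma>. if (\<lambda>l. \<gamma> l - \<alpha> l) = unitv j then cmult m (R \<alpha>) (blade {j}) C else 0)"
    by (rule sum.swap)
  also have "\<dots> = (\<Sum>j<m. if 1 \<le> \<gamma> j then cmult m (R (sub1 \<gamma> j)) (blade {j}) C else 0)"
  proof (intro sum.cong refl)
    fix j assume j: "j \<in> {..<m}"
    have e: "\<And>\<alpha>. \<alpha> \<in> Idx m \<gamma> \<Longrightarrow> ((\<lambda>l. \<gamma> l - \<alpha> l) = unitv j) \<longleftrightarrow> (1 \<le> \<gamma> j \<and> \<alpha> = sub1 \<gamma> j)"
    proof -
      fix \<alpha> assume a: "\<alpha> \<in> Idx m \<gamma>"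
      then have le: "\<And>l. \<alpha> l \<le> \<gamma> l" unfolding Idx_def by auto
      have pt: "\<And>l. (\<gamma> l - \<alpha> l = unitv j l) \<longleftrightarrow> (\<alpha> l = \<gamma> l - unitv j l \<and> unitv j l \<le> \<gamma> l)"
        using le nat_sub_eq by blast
      have "((\<lambda>l. \<gamma> l - \<alpha> l) = unitv j) \<longleftrightarrow> (\<forall>l. \<gamma> l - \<alpha> l = unitv j l)" by (auto simp: fun_eq_iff)
      also have "\<dots> \<longleftrightarrow> (\<forall>l. \<alpha> l = \<gamma> l - unitv j l) \<and> (\<forall>l. unitv j l \<le> \<gamma> l)" using pt by blast
      also have "(\<forall>l. unitv j l \<le> \<gamma> l) \<longleftrightarrow> 1 \<le> \<gamma> j" by (auto simp: unitv_def)
      also have "(\<forall>l. \<alpha> l = \<gamma> l - unitv j l) \<longleftrightarrow> \<alpha> = sub1 \<gamma> j" by (auto simp: sub1_def fun_eq_iff)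
      finally show "((\<lambda>l. \<gamma> l - \<alpha> l) = unitv j) \<longleftrightarrow> (1 \<le> \<gamma> j \<and> \<alpha> = sub1 \<gamma> j)" by blast
    qed
    have "(\<Sum>\<alpha>\<in>Idx m \<gamma>. if (\<lambda>l. \<gamma> l - \<alpha> l) = unitv j then cmult m (R \<alpha>) (blade {j}) C else 0)
        = (\<Sum>\<alpha>\<in>Idx m \<gamma>. if 1 \<le> \<gamma> j then (if \<alpha> = sub1 \<gamma> j then cmult m (R \<alpha>) (blade {j}) C else 0) else 0)"
      by (intro sum.cong refl) (simp add: e)
    also have "\<dots> = (if 1 \<le> \<gamma> j then (if sub1 \<gamma> j \<in> Idx m \<gamma> then cmult m (R (sub1 \<gamma> j)) (blade {j}) C else 0) else 0)"
      by (simp add: sum.delta)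
    also have "\<dots> = (if 1 \<le> \<gamma> j then cmult m (R (sub1 \<gamma> j)) (blade {j}) C else 0)"
    proof (cases "sub1 \<gamma> j \<in> Idx m \<gamma>")
      case False
      then have "\<not> (\<forall>i. m \<le> i \<longrightarrow> sub1 \<gamma> j i = 0)"
        using j unfolding Idx_def sub1_def unitv_def by auto
      then have "R (sub1 \<gamma> j) = (\<lambda>C. 0)" using v unfolding valid_def by auto
      then show ?thesis by simp
    qed simp
    finally show "(\<Sum>\<alpha>\<in>Idx m \<gamma>. if (\<lambda>l. \<gamma> l - \<alpha> l) = unitv j then cmult m (R \<alpha>) (blade {j}) C else 0)
        = (if 1 \<le> \<gamma> j then cmult m (R (sub1 \<gamma> j)) (blade {j}) C else 0)" .
  qed
  finally show ?thesis .
qed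

definition Top :: "nat \<Rightarrow> cpoly \<Rightarrow> cpoly" where
  "Top m R = pmult m (pmult m (xvec m) R) (xvec m)"

lemma Top_formula:
  assumes v: "valid m R"
  shows "Top m R \<beta> = (\<lambda>C. \<Sum>j<m. \<Sum>i<m. if 1 \<le> \<beta> j \<and> 1 \<le> sub1 \<beta> j i then
     cmult m (cmult m (blade {i}) (R (sub1 (sub1 \<beta> j) i))) (blade {j}) C else 0)"
proof
  fix C
  have v2: "valid m (pmult m (xvec m) R)" by (rule pmult_valid[OF v])
  have l: "\<And>\<gamma>. pmult m (xvec m) R \<gamma> = (\<lambda>C. \<Sum>i<m. if 1 \<le> \<gamma> i then cmult m (blade {i}) (R (sub1 \<gamma> i)) C else 0)"
    by (rule ext) (rule xvec_left)
  show "Top m R \<beta> C = (\<Sum>j<m. \<Sum>i<m. if 1 \<le> \<beta> j \<and> 1 \<le> sub1 \<beta> j i then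
     cmult m (cmult m (blade {i}) (R (sub1 (sub1 \<beta> j) i))) (blade {j}) C else 0)"
    unfolding Top_def xvec_right[OF v2] l
  proof (intro sum.cong refl)
    fix j assume "j \<in> {..<m}"
    show "(if 1 \<le> \<beta> j then cmult m (\<lambda>C. \<Sum>i<m. if 1 \<le> sub1 \<beta> j i then cmult m (blade {i}) (R (sub1 (sub1 \<beta> j) i)) C else 0) (blade {j}) C else 0) =
      (\<Sum>i<m. if 1 \<le> \<beta> j \<and> 1 \<le> sub1 \<beta> j i then cmult m (cmult m (blade {i}) (R (sub1 (sub1 \<beta> j) i))) (blade {j}) C else 0)"
      by (cases "1 \<le> \<beta> j") (simp_all add: cmult_sum_left cmult_if_left)
  qed
qed


lemma cmult_scale_left_fun: "cmult m (\<lambda>C. r * a C) b = (\<lambda>D. r * cmult m a b D)"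
  by (rule ext) (rule cmult_scale_left)

lemma cmult_scale_right_fun: "cmult m a (\<lambda>C. r * b C) = (\<lambda>D. r * cmult m a b D)"
  by (rule ext) (rule cmult_scale_right)

lemma pderiv2: "pderiv_x i (pderiv_x j p) \<alpha> = (\<lambda>C. (real (\<alpha> i + 1) * real (ad1 \<alpha> i j + 1)) * p (ad1 (ad1 \<alpha> i) j) C)"
  unfolding pderiv_x_def ad1_def by (simp add: algebra_simps)

lemma dirac2_formula: "dirac2 m P \<alpha> = (\<lambda>C. \<Sum>i<m. \<Sum>j<m. (real (\<alpha> i + 1) * real (ad1 \<alpha> i j + 1)) *
   cmult m (blade {i}) (cmult m (P (ad1 (ad1 \<alpha> i) j)) (blade {j})) C)"
  unfolding dirac2_def pderiv2 cmult_scale_left_fun cmult_scale_right_fun ..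

definition mf :: "nat \<Rightarrow> (nat \<Rightarrow> nat) \<Rightarrow> real" where "mf m \<alpha> = (\<Prod>i<m. fact (\<alpha> i))"

lemma mf_pos: "mf m \<alpha> > 0" unfolding mf_def by (intro prod_pos) auto

lemma mf_ad1: assumes "i < m" shows "mf m (ad1 \<alpha> i) = real (\<alpha> i + 1) * mf m \<alpha>"
proof -
  have "mf m (ad1 \<alpha> i) = (\<Prod>l<m. fact (\<alpha> l) * (if l = i then real (\<alpha> i + 1) else 1))"
    unfolding mf_def ad1_def unitv_def by (intro prod.cong refl) (auto simp: fact_Suc)
  also have "\<dots> = mf m \<alpha> * real (\<alpha> i + 1)"
    unfolding mf_def prod.distrib using assms by (simp add: prod.delta)
  finally show ?thesis by simp
qed

lemma sub1_ad1[simp]: "sub1 (ad1 \<alpha> i) i = \<alpha>"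
  unfolding sub1_def ad1_def by simp

lemma ad1_sub1: "1 \<le> \<beta> i \<Longrightarrow> ad1 (sub1 \<beta> i) i = \<beta>"
  unfolding sub1_def ad1_def unitv_def by (auto simp: fun_eq_iff)

lemma ad1_ge[simp]: "1 \<le> ad1 \<alpha> i i"
  unfolding ad1_def unitv_def by simp

lemma ad1_mons: assumes "i < m" shows "ad1 \<alpha> i \<in> mons m (Suc n) \<longleftrightarrow> \<alpha> \<in> mons m n"
proof -
  have s: "(\<Sum>l<m. ad1 \<alpha> i l) = (\<Sum>l<m. \<alpha> l) + 1"
    unfolding ad1_def unitv_def using assms by (simp add: sum.distrib)
  have "(\<forall>l. m \<le> l \<longrightarrow> ad1 \<alpha> i l = 0) \<longleftrightarrow> (\<forall>l. m \<le> l \<longrightarrow> \<alpha> l = 0)"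
    unfolding ad1_def unitv_def using assms by auto
  then show ?thesis unfolding mons_def using s by auto
qed

lemma reidx:
  assumes i: "i < m" and j: "j < m"
  shows "(\<Sum>\<beta>\<in>mons m (Suc (Suc n)). if 1 \<le> \<beta> j \<and> 1 \<le> sub1 \<beta> j i then g \<beta> else 0)
       = (\<Sum>\<alpha>\<in>mons m n. g (ad1 (ad1 \<alpha> i) j))"
proof -
  have "(\<Sum>\<beta>\<in>mons m (Suc (Suc n)). if 1 \<le> \<beta> j \<and> 1 \<le> sub1 \<beta> j i then g \<beta> else 0)
      = (\<Sum>\<beta>\<in>{\<beta>\<in>mons m (Suc (Suc n)). 1 \<le> \<beta> j \<and> 1 \<le> sub1 \<beta> j i}. g \<beta>)"
    by (simp add: sum.inter_filter)
  also have "\<dots> = (\<Sum>\<alpha>\<in>mons m n. g (ad1 (ad1 \<alpha> i) j))"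
  proof (rule sum.reindex_bij_witness[where i="\<lambda>\<alpha>. ad1 (ad1 \<alpha> i) j" and j="\<lambda>\<beta>. sub1 (sub1 \<beta> j) i"])
    fix a assume "a \<in> mons m n"
    then show "sub1 (sub1 (ad1 (ad1 a i) j) j) i = a" by simp
  next
    fix a assume "a \<in> mons m n"
    then show "ad1 (ad1 a i) j \<in> {\<beta> \<in> mons m (Suc (Suc n)). 1 \<le> \<beta> j \<and> 1 \<le> sub1 \<beta> j i}"
      using ad1_mons[OF i] ad1_mons[OF j] by simp (simp add: ad1_def unitv_def)
  next
    fix b assume b: "b \<in> {\<beta> \<in> mons m (Suc (Suc n)). 1 \<le> \<beta> j \<and> 1 \<le> sub1 \<beta> j i}"
    then have e: "ad1 (ad1 (sub1 (sub1 b j) i) i) j = b" by (simp add: ad1_sub1)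
    then show "ad1 (ad1 (sub1 (sub1 b j) i) i) j = b" .
    show "sub1 (sub1 b j) i \<in> mons m n"
      using b e ad1_mons[OF i, of "sub1 (sub1 b j) i"] ad1_mons[OF j, of "ad1 (sub1 (sub1 b j) i) i"] by simp
  qed (auto simp: ad1_sub1)
  finally show ?thesis .
qed


lemma cip_sum_left: "finite S \<Longrightarrow> cip m (\<lambda>C. \<Sum>s\<in>S. f s C) b = (\<Sum>s\<in>S. cip m (f s) b)"
  unfolding cip_def by (simp add: sum_distrib_right sum.swap[of _ S])

lemma cip_sum_right: "finite S \<Longrightarrow> cip m a (\<lambda>C. \<Sum>s\<in>S. f s C) = (\<Sum>s\<in>S. cip m a (f s))"
  unfolding cip_def by (simp add: sum_distrib_left sum.swap[of _ S])

lemma cip_if_left: "cip m (\<lambda>C. if P then a C else 0) b = (if P then cip m a b else 0)"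
  unfolding cip_def by simp

lemma cip_scale_right: "cip m a (\<lambda>C. c * b C) = c * cip m a b"
  unfolding cip_def by (simp add: sum_distrib_left algebra_simps)

lemma cip_sandwich:
  assumes "i < m" "j < m"
  shows "cip m (cmult m (cmult m (blade {i}) a) (blade {j})) b = cip m a (cmult m (blade {i}) (cmult m b (blade {j})))"
  using cip_right[OF assms(2)] cip_left[OF assms(1)] by simp

lemma mult_if0: "(x::real) * (if P then a else 0) = (if P then x * a else 0)" by simp

definition fip :: "nat \<Rightarrow> nat \<Rightarrow> cpoly \<Rightarrow> cpoly \<Rightarrow> real" where
  "fip m k P Q = (\<Sum>\<alpha>\<in>mons m k. mf m \<alpha> * cip m (P \<alpha>) (Q \<alpha>))"

lemma adjoint:
  assumes R: "R \<in> hpoly m n" and P: "P \<in> hpoly m (Suc (Suc n))"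
  shows "fip m (Suc (Suc n)) (Top m R) P = fip m n R (dirac2 m P)"
proof -
  define X where "X i j \<beta> = cmult m (cmult m (blade {i}) (R (sub1 (sub1 \<beta> j) i))) (blade {j})" for i j \<beta>
  define Y where "Y \<alpha> i j = cip m (R \<alpha>) (cmult m (blade {i}) (cmult m (P (ad1 (ad1 \<alpha> i) j)) (blade {j})))" for \<alpha> i j
  define K where "K \<alpha> i j = real (\<alpha> i + 1) * real (ad1 \<alpha> i j + 1)" for \<alpha> i j
  have v: "valid m R" using R by (rule hpoly_valid)
  have "fip m (Suc (Suc n)) (Top m R) P = (\<Sum>\<beta>\<in>mons m (Suc (Suc n)). mf m \<beta> *
      (\<Sum>j<m. \<Sum>i<m. if 1 \<le> \<beta> j \<and> 1 \<le> sub1 \<beta> j i then cip m (X i j \<beta>) (P \<beta>) else 0))"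
    unfolding fip_def Top_formula[OF v] X_def by (simp add: cip_sum_left cip_if_left)
  also have "\<dots> = (\<Sum>\<beta>\<in>mons m (Suc (Suc n)). \<Sum>j<m. \<Sum>i<m.
      if 1 \<le> \<beta> j \<and> 1 \<le> sub1 \<beta> j i then mf m \<beta> * cip m (X i j \<beta>) (P \<beta>) else 0)"
    by (simp add: sum_distrib_left mult_if0)
  also have "\<dots> = (\<Sum>j<m. \<Sum>i<m. \<Sum>\<beta>\<in>mons m (Suc (Suc n)).
      if 1 \<le> \<beta> j \<and> 1 \<le> sub1 \<beta> j i then mf m \<beta> * cip m (X i j \<beta>) (P \<beta>) else 0)"
    by (rule rot3)
  also have "\<dots> = (\<Sum>j<m. \<Sum>i<m. \<Sum>\<alpha>\<in>mons m n.
      mf m (ad1 (ad1 \<alpha> i) j) * cip m (X i j (ad1 (ad1 \<alpha> i) j)) (P (ad1 (ad1 \<alpha> i) j)))"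
    by (rule sum.cong[OF refl], rule sum.cong[OF refl], rule reidx, auto)
  also have "\<dots> = (\<Sum>j<m. \<Sum>i<m. \<Sum>\<alpha>\<in>mons m n. mf m \<alpha> * (K \<alpha> i j * Y \<alpha> i j))"
  proof (intro sum.cong refl)
    fix j i \<alpha> assume j: "j \<in> {..<m}" and i: "i \<in> {..<m}"
    show "mf m (ad1 (ad1 \<alpha> i) j) * cip m (X i j (ad1 (ad1 \<alpha> i) j)) (P (ad1 (ad1 \<alpha> i) j)) =
          mf m \<alpha> * (K \<alpha> i j * Y \<alpha> i j)"
      using i j unfolding X_def Y_def K_def
      by (simp add: mf_ad1 cip_sandwich)
  qed
  also have "\<dots> = (\<Sum>\<alpha>\<in>mons m n. \<Sum>i<m. \<Sum>j<m. mf m \<alpha> * (K \<alpha> i j * Y \<alpha> i j))"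
  proof -
    have "(\<Sum>\<alpha>\<in>mons m n. \<Sum>i<m. \<Sum>j<m. mf m \<alpha> * (K \<alpha> i j * Y \<alpha> i j)) =
          (\<Sum>i<m. \<Sum>j<m. \<Sum>\<alpha>\<in>mons m n. mf m \<alpha> * (K \<alpha> i j * Y \<alpha> i j))" by (rule rot3)
    also have "\<dots> = (\<Sum>j<m. \<Sum>i<m. \<Sum>\<alpha>\<in>mons m n. mf m \<alpha> * (K \<alpha> i j * Y \<alpha> i j))" by (rule sum.swap)
    finally show ?thesis by simp
  qed
  also have "\<dots> = fip m n R (dirac2 m P)"
    unfolding fip_def dirac2_formula Y_def K_def
    by (simp add: cip_sum_right cip_scale_right sum_distrib_left)
  finally show ?thesis .
qed


lemma cip_nonneg: "0 \<le> cip m a a"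
  unfolding cip_def by (rule sum_nonneg) simp

lemma cmult_zero_right_fun[simp]: "cmult m a (\<lambda>C. 0) = (\<lambda>D. 0)"
  by (rule ext) simp

lemma cmult_zero_left_fun[simp]: "cmult m (\<lambda>C. 0) b = (\<lambda>D. 0)"
  by (rule ext) simp

lemma fip_self_zero:
  assumes P: "P \<in> hpoly m k" and z: "fip m k P P = 0"
  shows "P = (\<lambda>\<alpha> C. 0)"
proof (intro ext)
  fix \<alpha> C
  have nn: "\<And>\<alpha>. 0 \<le> mf m \<alpha> * cip m (P \<alpha>) (P \<alpha>)"
    by (intro mult_nonneg_nonneg cip_nonneg less_imp_le[OF mf_pos])
  show "P \<alpha> C = 0"
  proof (cases "\<alpha> \<in> mons m k")
    case True
    then have "mf m \<alpha> * cip m (P \<alpha>) (P \<alpha>) = 0"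
      using z nn unfolding fip_def by (subst (asm) sum_nonneg_eq_0_iff) auto
    then have "cip m (P \<alpha>) (P \<alpha>) = 0" using mf_pos[of m \<alpha>] by simp
    then have "\<forall>C\<in>PP m. P \<alpha> C * P \<alpha> C = 0"
      unfolding cip_def by (subst (asm) sum_nonneg_eq_0_iff) auto
    then show ?thesis using P unfolding hpoly_def clif_def by (cases "C \<in> PP m") auto
  next
    case False then show ?thesis using P unfolding hpoly_def by auto
  qed
qed

lemma fip_zero_right: "fip m k R (\<lambda>\<alpha> C. 0) = 0"
  unfolding fip_def cip_def by simp

lemma Top_hpoly: "R \<in> hpoly m n \<Longrightarrow> Top m R \<in> hpoly m (Suc (Suc n))"
  unfolding Top_def using pmult_hpoly[OF pmult_hpoly[OF xvec_hpoly] xvec_hpoly] by simp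

lemma ad1_sum: "i < m \<Longrightarrow> (\<Sum>l<m. ad1 \<alpha> i l) = (\<Sum>l<m. \<alpha> l) + 1"
  unfolding ad1_def unitv_def by (simp add: sum.distrib)

lemma dirac2_clif: "dirac2 m P \<alpha> \<in> clif m"
  unfolding dirac2_def clif_def using cmult_clif[unfolded clif_def] by (auto intro!: sum.neutral)

lemma dirac2_hpoly:
  assumes P: "P \<in> hpoly m (Suc (Suc n))"
  shows "dirac2 m P \<in> hpoly m n"
  unfolding hpoly_def
proof (intro CollectI conjI allI impI)
  fix \<alpha> assume a: "\<alpha> \<notin> mons m n"
  have "\<And>i j. i < m \<Longrightarrow> j < m \<Longrightarrow> P (ad1 (ad1 \<alpha> i) j) = (\<lambda>C. 0)"
  proof -
    fix i j assume "i < m" "j < m"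
    then have "ad1 (ad1 \<alpha> i) j \<notin> mons m (Suc (Suc n))" using a ad1_mons by simp
    then show "P (ad1 (ad1 \<alpha> i) j) = (\<lambda>C. 0)" using P unfolding hpoly_def by auto
  qed
  then show "dirac2 m P \<alpha> = (\<lambda>C. 0)" unfolding dirac2_formula by (auto intro!: sum.neutral)
qed (rule dirac2_clif)

lemma dirac2_low:
  assumes P: "P \<in> hpoly m k" and k: "k < 2"
  shows "dirac2 m P = (\<lambda>\<alpha> C. 0)"
proof (intro ext)
  fix \<alpha> C
  have "\<And>i j. i < m \<Longrightarrow> j < m \<Longrightarrow> P (ad1 (ad1 \<alpha> i) j) = (\<lambda>C. 0)"
  proof -
    fix i j assume i: "i < m" and j: "j < m"
    have "ad1 (ad1 \<alpha> i) j \<notin> mons m k"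
      using ad1_sum[OF i, of \<alpha>] ad1_sum[OF j, of "ad1 \<alpha> i"] k unfolding mons_def by auto
    then show "P (ad1 (ad1 \<alpha> i) j) = (\<lambda>C. 0)" using P unfolding hpoly_def by auto
  qed
  then show "dirac2 m P \<alpha> C = 0" unfolding dirac2_formula by (auto intro!: sum.neutral)
qed

lemma Top_inj:
  assumes m: "0 < m" and R: "R \<in> hpoly m n" and z: "Top m R = (\<lambda>\<alpha> C. 0)"
  shows "R = (\<lambda>\<alpha> C. 0)"
proof (rule ccontr)
  assume nz: "R \<noteq> (\<lambda>\<alpha> C. 0)"
  define S where "S = {\<alpha> \<in> mons m n. R \<alpha> \<noteq> (\<lambda>C. 0)}"
  have fS: "finite S" unfolding S_def by simp
  have neS: "S \<noteq> {}"
  proof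
    assume "S = {}"
    then have "\<And>\<alpha>. R \<alpha> = (\<lambda>C. 0)" using R unfolding S_def hpoly_def by blast
    then show False using nz by (auto simp: fun_eq_iff)
  qed
  define d where "d = Max ((\<lambda>\<alpha>. \<alpha> 0) ` S)"
  have "d \<in> (\<lambda>\<alpha>. \<alpha> 0) ` S" using Max_in[of "(\<lambda>\<alpha>. \<alpha> 0) ` S"] fS neS unfolding d_def by auto
  then obtain \<alpha> where aS: "\<alpha> \<in> S" and ad: "\<alpha> 0 = d" by auto
  have big: "\<And>\<gamma>. d < \<gamma> 0 \<Longrightarrow> R \<gamma> = (\<lambda>C. 0)"
  proof -
    fix \<gamma> :: "nat \<Rightarrow> nat" assume g: "d < \<gamma> 0"
    show "R \<gamma> = (\<lambda>C. 0)"
    proof (rule ccontr)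
      assume "R \<gamma> \<noteq> (\<lambda>C. 0)"
      then have "\<gamma> \<in> S" using R unfolding S_def hpoly_def by auto
      then have "\<gamma> 0 \<le> d" unfolding d_def using fS by auto
      then show False using g by simp
    qed
  qed
  define \<beta> where "\<beta> = ad1 (ad1 \<alpha> 0) 0"
  have b0: "\<beta> 0 = d + 2" unfolding \<beta>_def ad1_def unitv_def using ad by simp
  have v: "valid m R" using R by (rule hpoly_valid)
  have terms: "\<And>i j C. i < m \<Longrightarrow> j < m \<Longrightarrow>
     (if 1 \<le> \<beta> j \<and> 1 \<le> sub1 \<beta> j i then cmult m (cmult m (blade {i}) (R (sub1 (sub1 \<beta> j) i))) (blade {j}) C else 0)
     = (if j = 0 then (if i = 0 then cmult m (cmult m (blade {0}) (R \<alpha>)) (blade {0}) C else 0) else 0)"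
  proof -
    fix i j C assume i: "i < m" and j: "j < m"
    show "(if 1 \<le> \<beta> j \<and> 1 \<le> sub1 \<beta> j i then cmult m (cmult m (blade {i}) (R (sub1 (sub1 \<beta> j) i))) (blade {j}) C else 0)
     = (if j = 0 then (if i = 0 then cmult m (cmult m (blade {0}) (R \<alpha>)) (blade {0}) C else 0) else 0)"
    proof (cases "i = 0 \<and> j = 0")
      case True
      then show ?thesis by (simp add: \<beta>_def) (simp add: ad1_def unitv_def)
    next
      case False
      have "sub1 (sub1 \<beta> j) i 0 = \<beta> 0 - unitv j 0 - unitv i 0" unfolding sub1_def by simp
      then have "d < sub1 (sub1 \<beta> j) i 0" using b0 False unfolding unitv_def by auto
      then have "R (sub1 (sub1 \<beta> j) i) = (\<lambda>C. 0)" by (rule big)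
      then show ?thesis using False by auto
    qed
  qed
  have "\<And>C. cmult m (blade {0}) (cmult m (R \<alpha>) (blade {0})) C = 0"
  proof -
    fix C
    have "0 = Top m R \<beta> C" using z by simp
    also have "\<dots> = (\<Sum>j<m. \<Sum>i<m. if j = 0 then (if i = 0 then cmult m (cmult m (blade {0}) (R \<alpha>)) (blade {0}) C else 0) else 0)"
      unfolding Top_formula[OF v] using terms by (intro sum.cong refl) auto
    also have "\<dots> = cmult m (cmult m (blade {0}) (R \<alpha>)) (blade {0}) C"
    proof -
      have "\<And>j. (\<Sum>i<m. if j = 0 then (if i = 0 then cmult m (cmult m (blade {0}) (R \<alpha>)) (blade {0}) C else 0) else 0)
          = (if j = 0 then cmult m (cmult m (blade {0}) (R \<alpha>)) (blade {0}) C else 0)"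
        using m by (simp add: sum.delta)
      then have "(\<Sum>j<m. \<Sum>i<m. if j = 0 then (if i = 0 then cmult m (cmult m (blade {0}) (R \<alpha>)) (blade {0}) C else 0) else 0)
          = (\<Sum>j<m. if j = 0 then cmult m (cmult m (blade {0}) (R \<alpha>)) (blade {0}) C else 0)"
        by (intro sum.cong refl)
      also have "\<dots> = cmult m (cmult m (blade {0}) (R \<alpha>)) (blade {0}) C"
        using m by (subst sum.delta) auto
      finally show ?thesis .
    qed
    finally show "cmult m (blade {0}) (cmult m (R \<alpha>) (blade {0})) C = 0" by (simp add: cmult_assoc)
  qed
  then have "R \<alpha> = (\<lambda>C. 0)"
    using blade_sandwich_zero[OF m] R unfolding hpoly_def by auto
  then show False using aS unfolding S_def by auto
qed


definition sc :: "real \<Rightarrow> cpoly \<Rightarrow> cpoly" where "sc r p = (\<lambda>\<alpha> C. r * p \<alpha> C)"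

lemma vs: "vector_space sc"
  by unfold_locales (auto simp: sc_def fun_eq_iff algebra_simps)

lemma sum_fun_apply2: "finite S \<Longrightarrow> (\<Sum>s\<in>S. f s) \<alpha> C = (\<Sum>s\<in>S. f s \<alpha> C)"
  by (induction S rule: finite_induct) auto

lemma plus_lam: "p + q = (\<lambda>\<alpha> C. p \<alpha> C + q \<alpha> C)" by (auto simp: fun_eq_iff)

lemma pmult_add_right_fun: "pmult m r (\<lambda>\<alpha> C. p \<alpha> C + p' \<alpha> C) = (\<lambda>\<gamma> C. pmult m r p \<gamma> C + pmult m r p' \<gamma> C)"
  by (auto simp: fun_eq_iff pmult_add_right)

lemma pmult_scale_right_fun: "pmult m r (\<lambda>\<alpha> C. c * p \<alpha> C) = (\<lambda>\<gamma> C. c * pmult m r p \<gamma> C)"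
  by (auto simp: fun_eq_iff pmult_scale_right)

lemma Top_add: "Top m (p + q) = Top m p + Top m q"
  unfolding Top_def plus_lam pmult_add_right_fun by (auto simp: fun_eq_iff pmult_add_left)

lemma Top_sc: "Top m (sc r p) = sc r (Top m p)"
  unfolding Top_def sc_def pmult_scale_right_fun by (auto simp: fun_eq_iff pmult_scale_left)

lemma cmult_add_left_fun: "cmult m (\<lambda>C. a C + a' C) b = (\<lambda>D. cmult m a b D + cmult m a' b D)"
  by (rule ext) (rule cmult_add_left)

lemma dirac2_add: "dirac2 m (p + q) = dirac2 m p + dirac2 m q"
  unfolding dirac2_formula[abs_def] plus_lam
  by (auto simp: fun_eq_iff cmult_add_left_fun cmult_add_right sum.distrib algebra_simps)

lemma dirac2_sc: "dirac2 m (sc r p) = sc r (dirac2 m p)"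
  unfolding dirac2_formula[abs_def] sc_def
  by (auto simp: fun_eq_iff cmult_scale_left_fun cmult_scale_right sum_distrib_left algebra_simps)


lemma zero_cpoly: "(0::cpoly) = (\<lambda>\<alpha> C. 0)" by (simp add: fun_eq_iff)

lemma hpoly_zero: "(\<lambda>\<alpha> C. 0) \<in> hpoly m k"
  unfolding hpoly_def clif_def by auto

lemma hpoly_add: "p \<in> hpoly m k \<Longrightarrow> q \<in> hpoly m k \<Longrightarrow> p + q \<in> hpoly m k"
  unfolding hpoly_def clif_def by (auto simp: fun_eq_iff)

lemma hpoly_sc: "p \<in> hpoly m k \<Longrightarrow> sc r p \<in> hpoly m k"
  unfolding hpoly_def clif_def sc_def by (auto simp: fun_eq_iff)

definition mono :: "(nat \<Rightarrow> nat) \<Rightarrow> nat set \<Rightarrow> cpoly" where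
  "mono \<alpha> A = (\<lambda>\<beta> C. if \<beta> = \<alpha> \<and> C = A then 1 else 0)"

lemma hpoly_expand:
  assumes p: "p \<in> hpoly m k"
  shows "p = (\<Sum>\<alpha>\<in>mons m k. \<Sum>A\<in>PP m. sc (p \<alpha> A) (mono \<alpha> A))"
proof (intro ext)
  fix \<beta> C
  have "(\<Sum>\<alpha>\<in>mons m k. \<Sum>A\<in>PP m. sc (p \<alpha> A) (mono \<alpha> A)) \<beta> C =
      (\<Sum>\<alpha>\<in>mons m k. \<Sum>A\<in>PP m. p \<alpha> A * (if \<beta> = \<alpha> \<and> C = A then 1 else 0))"
    by (simp add: sum_fun_apply2 sc_def mono_def)
  also have "\<dots> = (\<Sum>x\<in>mons m k \<times> PP m. p (fst x) (snd x) * (if \<beta> = fst x \<and> C = snd x then 1 else 0))"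
    by (simp add: sum.cartesian_product case_prod_beta)
  also have "\<dots> = (\<Sum>x\<in>mons m k \<times> PP m. if x = (\<beta>, C) then p (fst x) (snd x) else 0)"
    by (intro sum.cong refl) auto
  also have "\<dots> = (if (\<beta>, C) \<in> mons m k \<times> PP m then p \<beta> C else 0)"
    by (subst sum.delta) auto
  also have "\<dots> = p \<beta> C" using p unfolding hpoly_def clif_def by (auto simp: mem_Times_iff)
  finally show "p \<beta> C = (\<Sum>\<alpha>\<in>mons m k. \<Sum>A\<in>PP m. sc (p \<alpha> A) (mono \<alpha> A)) \<beta> C" by simp
qed

lemma decomp_core:
  assumes m: "0 < m"
  shows "hpoly m n \<subseteq> (\<lambda>R. dirac2 m (Top m R)) ` hpoly m n"
proof -
  interpret V: vector_space sc by (rule vs)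
  define f where "f R = dirac2 m (Top m R)" for R
  define B where "B = (\<lambda>(\<alpha>,A). mono \<alpha> A) ` (mons m n \<times> PP m)"
  have fB: "finite B" unfolding B_def by simp
  have sub: "V.subspace (hpoly m n)"
    unfolding V.subspace_def using hpoly_zero[of m n] hpoly_add hpoly_sc by (auto simp: zero_cpoly)
  have WB: "hpoly m n \<subseteq> V.span B"
  proof
    fix p assume p: "p \<in> hpoly m n"
    have "(\<Sum>\<alpha>\<in>mons m n. \<Sum>A\<in>PP m. sc (p \<alpha> A) (mono \<alpha> A)) \<in> V.span B"
      by (intro V.span_sum V.span_scale V.span_base) (auto simp: B_def)
    then show "p \<in> V.span B" using hpoly_expand[OF p] by simp
  qed
  have lin: "Vector_Spaces.linear sc sc f"
    unfolding Vector_Spaces.linear_iff f_def using vs by (simp add: Top_add Top_sc dirac2_add dirac2_sc)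
  have fW: "f ` hpoly m n \<subseteq> hpoly m n"
    unfolding f_def using Top_hpoly dirac2_hpoly by auto
  have z: "\<And>R. R \<in> hpoly m n \<Longrightarrow> f R = (\<lambda>\<alpha> C. 0) \<Longrightarrow> R = (\<lambda>\<alpha> C. 0)"
  proof -
    fix R assume R: "R \<in> hpoly m n" and fR: "f R = (\<lambda>\<alpha> C. 0)"
    have T: "Top m R \<in> hpoly m (Suc (Suc n))" using Top_hpoly[OF R] .
    have "fip m (Suc (Suc n)) (Top m R) (Top m R) = fip m n R (dirac2 m (Top m R))"
      by (rule adjoint[OF R T])
    also have "\<dots> = 0" using fR unfolding f_def by (simp add: fip_zero_right)
    finally have "Top m R = (\<lambda>\<alpha> C. 0)" using fip_self_zero[OF T] by simp
    then show "R = (\<lambda>\<alpha> C. 0)" using Top_inj[OF m R] by simp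
  qed
  have inj: "inj_on f (hpoly m n)"
  proof (rule inj_onI)
    fix x y assume x: "x \<in> hpoly m n" and y: "y \<in> hpoly m n" and e: "f x = f y"
    have d: "x - y \<in> hpoly m n" using V.subspace_diff[OF sub x y] .
    interpret lf: Vector_Spaces.linear sc sc f by (rule lin)
    have "f (x - y) = f x - f y" by (rule lf.diff)
    also have "\<dots> = (\<lambda>\<alpha> C. 0)" using e by (simp add: fun_eq_iff)
    finally have "x - y = (\<lambda>\<alpha> C. 0)" using z[OF d] by simp
    then show "x = y" by (simp add: fun_eq_iff)
  qed
  show ?thesis using V.inj_endo_surj[OF fB sub WB lin fW inj] unfolding f_def .
qed


lemma dirac2_zero[simp]: "dirac2 m (\<lambda>\<alpha> C. 0) = (\<lambda>\<alpha> C. 0)"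
  unfolding dirac2_formula[abs_def] by simp

lemma Top_zero[simp]: "Top m (\<lambda>\<alpha> C. 0) = (\<lambda>\<alpha> C. 0)"
  unfolding Top_def by simp

lemma hpoly_sum: "finite S \<Longrightarrow> (\<And>s. s \<in> S \<Longrightarrow> Q s \<in> hpoly m k) \<Longrightarrow> (\<lambda>\<alpha> C. \<Sum>s\<in>S. Q s \<alpha> C) \<in> hpoly m k"
  unfolding hpoly_def clif_def by (auto intro!: sum.neutral simp: fun_eq_iff)

lemma Top_sum: "finite S \<Longrightarrow> Top m (\<lambda>\<alpha> C. \<Sum>s\<in>S. Q s \<alpha> C) = (\<lambda>\<alpha> C. \<Sum>s\<in>S. Top m (Q s) \<alpha> C)"
  unfolding Top_def by (simp add: pmult_sum_left pmult_sum_right)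

lemma infra_low: "k < 2 \<Longrightarrow> infra m k = hpoly m k"
  unfolding infra_def using dirac2_low by auto

lemma xIx_0: "xIx m k 0 = infra m k"
proof -
  have "\<And>P. P \<in> infra m k \<Longrightarrow> pmult m (pmult m (xpow m 0) P) (xpow m 0) = P"
    unfolding infra_def xpow_0 using hpoly_valid pmult_pone_left pmult_pone_right pmult_valid by auto
  then show ?thesis unfolding xIx_def by force
qed

lemma xIx_Suc: "xIx m k (Suc s) = Top m ` xIx m (k - 2) s"
proof -
  have e: "k - 2 * Suc s = k - 2 - 2 * s" by simp
  show ?thesis unfolding xIx_def e sandwich_Suc Top_def by blast
qed

lemma xIx_hpoly: assumes "s \<le> k div 2" shows "xIx m k s \<subseteq> hpoly m k"
proof
  fix q assume "q \<in> xIx m k s"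
  then obtain P where q: "q = pmult m (pmult m (xpow m s) P) (xpow m s)" and P: "P \<in> infra m (k - 2 * s)"
    unfolding xIx_def by auto
  have "q \<in> hpoly m (s + (k - 2 * s) + s)"
    unfolding q using P unfolding infra_def by (intro pmult_hpoly xpow_hpoly) auto
  moreover have "s + (k - 2 * s) + s = k" using assms by simp
  ultimately show "q \<in> hpoly m k" by simp
qed

lemma decomp_ex:
  assumes m: "0 < m" and P: "P \<in> hpoly m (Suc (Suc n))"
  shows "\<exists>R\<in>hpoly m n. (\<lambda>\<alpha> C. P \<alpha> C - Top m R \<alpha> C) \<in> infra m (Suc (Suc n))"
proof -
  have "dirac2 m P \<in> hpoly m n" using dirac2_hpoly[OF P] .
  then obtain R where R: "R \<in> hpoly m n" and e: "dirac2 m (Top m R) = dirac2 m P"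
    using decomp_core[OF m, of n] by auto
  have I: "(\<lambda>\<alpha> C. P \<alpha> C - Top m R \<alpha> C) = P + sc (-1) (Top m R)"
    by (simp add: fun_eq_iff sc_def)
  have "(\<lambda>\<alpha> C. P \<alpha> C - Top m R \<alpha> C) \<in> hpoly m (Suc (Suc n))"
    unfolding I by (intro hpoly_add hpoly_sc P Top_hpoly R)
  moreover have "dirac2 m (\<lambda>\<alpha> C. P \<alpha> C - Top m R \<alpha> C) = (\<lambda>\<alpha> C. 0)"
    unfolding I dirac2_add dirac2_sc e by (simp add: fun_eq_iff sc_def)
  ultimately show ?thesis using R unfolding infra_def by auto
qed

lemma decomp_unique:
  assumes m: "0 < m" and I: "I \<in> infra m (Suc (Suc n))" and R: "R \<in> hpoly m n"
    and z: "(\<lambda>\<alpha> C. I \<alpha> C + Top m R \<alpha> C) = (\<lambda>\<alpha> C. 0)"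
  shows "I = (\<lambda>\<alpha> C. 0) \<and> R = (\<lambda>\<alpha> C. 0)"
proof -
  have TR: "Top m R = sc (-1) I" using z by (auto simp: fun_eq_iff sc_def) (metis add_eq_0_iff)
  have "dirac2 m (Top m R) = (\<lambda>\<alpha> C. 0)"
    unfolding TR dirac2_sc using I unfolding infra_def by (simp add: sc_def)
  then have "fip m (Suc (Suc n)) (Top m R) (Top m R) = 0"
    using adjoint[OF R Top_hpoly[OF R]] by (simp add: fip_zero_right)
  then have T0: "Top m R = (\<lambda>\<alpha> C. 0)" using fip_self_zero[OF Top_hpoly[OF R]] by simp
  then have "R = (\<lambda>\<alpha> C. 0)" using Top_inj[OF m R] by simp
  moreover have "I = (\<lambda>\<alpha> C. 0)" using z T0 by (auto simp: fun_eq_iff)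
  ultimately show ?thesis by simp
qed


lemma main_pos:
  assumes m: "0 < m"
  shows "(\<forall>P \<in> hpoly m k. \<exists>Q. (\<forall>s \<le> k div 2. Q s \<in> xIx m k s)
          \<and> P = (\<lambda>\<alpha> C. \<Sum>s \<le> k div 2. Q s \<alpha> C))
    \<and> (\<forall>Q. (\<forall>s \<le> k div 2. Q s \<in> xIx m k s)
          \<and> (\<lambda>\<alpha> C. \<Sum>s \<le> k div 2. Q s \<alpha> C) = (\<lambda>\<alpha> C. 0)
          \<longrightarrow> (\<forall>s \<le> k div 2. Q s = (\<lambda>\<alpha> C. 0)))"
proof (induction k rule: less_induct)
  case (less k)
  show ?case
  proof (cases "k < 2")
    case True
    then have kd: "k div 2 = 0" by simp
    have X: "xIx m k 0 = hpoly m k" using xIx_0 infra_low[OF True] by simp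
    show ?thesis
    proof (intro conjI ballI allI impI)
      fix P assume P: "P \<in> hpoly m k"
      show "\<exists>Q. (\<forall>s \<le> k div 2. Q s \<in> xIx m k s) \<and> P = (\<lambda>\<alpha> C. \<Sum>s \<le> k div 2. Q s \<alpha> C)"
        by (rule exI[of _ "\<lambda>s. P"]) (simp add: kd X P)
    next
      fix Q s assume "(\<forall>s \<le> k div 2. Q s \<in> xIx m k s) \<and> (\<lambda>\<alpha> C. \<Sum>s \<le> k div 2. Q s \<alpha> C) = (\<lambda>\<alpha> C. 0)"
        and s: "s \<le> k div 2"
      then have "Q 0 = (\<lambda>\<alpha> C. 0)" by (simp add: kd)
      then show "Q s = (\<lambda>\<alpha> C. 0)" using s by (simp add: kd)
    qed
  next
    case False
    define n where "n = k - 2"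
    have k: "k = Suc (Suc n)" using False unfolding n_def by simp
    have kd: "k div 2 = Suc (n div 2)" unfolding k by simp
    have k2: "k - 2 = n" unfolding k by simp
    have IH: "(\<forall>P \<in> hpoly m n. \<exists>Q. (\<forall>s \<le> n div 2. Q s \<in> xIx m n s)
          \<and> P = (\<lambda>\<alpha> C. \<Sum>s \<le> n div 2. Q s \<alpha> C))
      \<and> (\<forall>Q. (\<forall>s \<le> n div 2. Q s \<in> xIx m n s)
          \<and> (\<lambda>\<alpha> C. \<Sum>s \<le> n div 2. Q s \<alpha> C) = (\<lambda>\<alpha> C. 0)
          \<longrightarrow> (\<forall>s \<le> n div 2. Q s = (\<lambda>\<alpha> C. 0)))"
      by (rule less.IH) (simp add: k)
    show ?thesis
    proof (intro conjI ballI allI impI)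
      fix P assume P: "P \<in> hpoly m k"
      have P': "P \<in> hpoly m (Suc (Suc n))" using P k by simp
      obtain R where R: "R \<in> hpoly m n" and I': "(\<lambda>\<alpha> C. P \<alpha> C - Top m R \<alpha> C) \<in> infra m (Suc (Suc n))"
        using decomp_ex[OF m P'] by blast
      have I: "(\<lambda>\<alpha> C. P \<alpha> C - Top m R \<alpha> C) \<in> infra m k" using I' k by simp
      obtain Q' where Q': "\<forall>s \<le> n div 2. Q' s \<in> xIx m n s" and RQ: "R = (\<lambda>\<alpha> C. \<Sum>s \<le> n div 2. Q' s \<alpha> C)"
        using bspec[OF conjunct1[OF IH] R] by (elim exE conjE)
      define Q where "Q s = (if s = 0 then (\<lambda>\<alpha> C. P \<alpha> C - Top m R \<alpha> C) else Top m (Q' (s - 1)))" for s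
      have mem: "\<forall>s \<le> k div 2. Q s \<in> xIx m k s"
      proof (intro allI impI)
        fix s assume s: "s \<le> k div 2"
        show "Q s \<in> xIx m k s"
        proof (cases s)
          case 0 then show ?thesis using I xIx_0 by (simp add: Q_def)
        next
          case (Suc s')
          then have "s' \<le> n div 2" using s kd by simp
          then show ?thesis using Q' unfolding Suc xIx_Suc k2 Q_def by auto
        qed
      qed
      have "(\<lambda>\<alpha> C. \<Sum>s \<le> k div 2. Q s \<alpha> C) = (\<lambda>\<alpha> C. Q 0 \<alpha> C + (\<Sum>s \<le> n div 2. Q (Suc s) \<alpha> C))"
        unfolding kd by (simp only: sum.atMost_Suc_shift)
      also have "\<dots> = (\<lambda>\<alpha> C. P \<alpha> C - Top m R \<alpha> C + (\<Sum>s \<le> n div 2. Top m (Q' s) \<alpha> C))"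
        by (simp add: Q_def)
      also have "\<dots> = P" unfolding RQ Top_sum[OF finite_atMost] by simp
      finally show "\<exists>Q. (\<forall>s \<le> k div 2. Q s \<in> xIx m k s) \<and> P = (\<lambda>\<alpha> C. \<Sum>s \<le> k div 2. Q s \<alpha> C)"
        using mem by auto
    next
      fix Q s0 assume H: "(\<forall>s \<le> k div 2. Q s \<in> xIx m k s) \<and> (\<lambda>\<alpha> C. \<Sum>s \<le> k div 2. Q s \<alpha> C) = (\<lambda>\<alpha> C. 0)"
        and s0: "s0 \<le> k div 2"
      have Q0: "Q 0 \<in> infra m (Suc (Suc n))" using H xIx_0 k by auto
      have ch: "\<forall>s. \<exists>q. s \<le> n div 2 \<longrightarrow> q \<in> xIx m n s \<and> Q (Suc s) = Top m q"
      proof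
        fix s
        show "\<exists>q. s \<le> n div 2 \<longrightarrow> q \<in> xIx m n s \<and> Q (Suc s) = Top m q"
        proof (cases "s \<le> n div 2")
          case True
          then have "Q (Suc s) \<in> xIx m k (Suc s)" using H kd by auto
          then show ?thesis unfolding xIx_Suc k2 by auto
        qed simp
      qed
      obtain Q' where Q'a: "\<forall>s. s \<le> n div 2 \<longrightarrow> Q' s \<in> xIx m n s \<and> Q (Suc s) = Top m (Q' s)"
        using choice[OF ch] by (elim exE)
      have Q': "\<And>s. s \<le> n div 2 \<Longrightarrow> Q' s \<in> xIx m n s \<and> Q (Suc s) = Top m (Q' s)"
        using Q'a by blast
      define R where "R = (\<lambda>\<alpha> C. \<Sum>s \<le> n div 2. Q' s \<alpha> C)"
      have "\<And>s. s \<le> n div 2 \<Longrightarrow> Q' s \<in> hpoly m n" using Q' xIx_hpoly by blast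
      then have R: "R \<in> hpoly m n" unfolding R_def by (intro hpoly_sum) auto
      have "(\<lambda>\<alpha> C. Q 0 \<alpha> C + Top m R \<alpha> C) = (\<lambda>\<alpha> C. Q 0 \<alpha> C + (\<Sum>s \<le> n div 2. Q (Suc s) \<alpha> C))"
        unfolding R_def Top_sum[OF finite_atMost] using Q' by simp
      also have "\<dots> = (\<lambda>\<alpha> C. \<Sum>s \<le> k div 2. Q s \<alpha> C)"
        unfolding kd by (simp only: sum.atMost_Suc_shift)
      also have "\<dots> = (\<lambda>\<alpha> C. 0)" using H by simp
      finally have "Q 0 = (\<lambda>\<alpha> C. 0) \<and> R = (\<lambda>\<alpha> C. 0)" by (rule decomp_unique[OF m Q0 R])
      then have Q00: "Q 0 = (\<lambda>\<alpha> C. 0)" and R0: "R = (\<lambda>\<alpha> C. 0)" by auto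
      have "(\<forall>s \<le> n div 2. Q' s \<in> xIx m n s) \<and> (\<lambda>\<alpha> C. \<Sum>s \<le> n div 2. Q' s \<alpha> C) = (\<lambda>\<alpha> C. 0)"
        using Q' R0 unfolding R_def by auto
      then have "\<forall>s \<le> n div 2. Q' s = (\<lambda>\<alpha> C. 0)"
        by (rule mp[OF spec[OF conjunct2[OF IH], of Q']])
      then have "\<And>s. s \<le> n div 2 \<Longrightarrow> Q (Suc s) = (\<lambda>\<alpha> C. 0)" using Q' by simp
      then show "Q s0 = (\<lambda>\<alpha> C. 0)"
      proof (cases s0)
        case 0 then show ?thesis using Q00 by simp
      next
        case (Suc s')
        then have "s' \<le> n div 2" using s0 kd by simp
        then show ?thesis using \<open>\<And>s. s \<le> n div 2 \<Longrightarrow> Q (Suc s) = (\<lambda>\<alpha> C. 0)\<close> Suc by simp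
      qed
    qed
  qed
qed


lemma zero_xIx: "(\<lambda>\<alpha> C. 0) \<in> xIx m k s"
proof -
  have "(\<lambda>\<alpha> C. 0) \<in> infra m (k - 2 * s)" unfolding infra_def using hpoly_zero by simp
  then show ?thesis unfolding xIx_def by force
qed

lemma xpow0_Suc: "xpow 0 (Suc s) = (\<lambda>\<alpha> C. 0)"
proof -
  have "xvec 0 = (\<lambda>\<alpha> C. 0)" unfolding xvec_def by simp
  then show ?thesis by (simp add: xpow_Suc)
qed

lemma hpoly0: "0 < k \<Longrightarrow> p \<in> hpoly 0 k \<Longrightarrow> p = (\<lambda>\<alpha> C. 0)"
  unfolding hpoly_def mons_def by (auto simp: fun_eq_iff)

lemma main_zero:
  assumes k: "2 \<le> k"
  shows "(\<forall>P \<in> hpoly 0 k. \<exists>Q. (\<forall>s \<le> k div 2. Q s \<in> xIx 0 k s)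
          \<and> P = (\<lambda>\<alpha> C. \<Sum>s \<le> k div 2. Q s \<alpha> C))
    \<and> (\<forall>Q. (\<forall>s \<le> k div 2. Q s \<in> xIx 0 k s)
          \<and> (\<lambda>\<alpha> C. \<Sum>s \<le> k div 2. Q s \<alpha> C) = (\<lambda>\<alpha> C. 0)
          \<longrightarrow> (\<forall>s \<le> k div 2. Q s = (\<lambda>\<alpha> C. 0)))"
proof (intro conjI ballI allI impI)
  fix P assume P: "P \<in> hpoly 0 k"
  have k0: "0 < k" using k by simp
  have "P = (\<lambda>\<alpha> C. 0)" by (rule hpoly0[OF k0 P])
  then show "\<exists>Q. (\<forall>s \<le> k div 2. Q s \<in> xIx 0 k s) \<and> P = (\<lambda>\<alpha> C. \<Sum>s \<le> k div 2. Q s \<alpha> C)"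
    by (intro exI[of _ "\<lambda>s. (\<lambda>\<alpha> C. 0)"]) (simp add: zero_xIx)
next
  fix Q s assume H: "(\<forall>s \<le> k div 2. Q s \<in> xIx 0 k s) \<and> (\<lambda>\<alpha> C. \<Sum>s \<le> k div 2. Q s \<alpha> C) = (\<lambda>\<alpha> C. 0)"
    and s: "s \<le> k div 2"
  then have Qs: "Q s \<in> xIx 0 k s" by simp
  show "Q s = (\<lambda>\<alpha> C. 0)"
  proof (cases s)
    case 0
    then have "Q s \<in> hpoly 0 k" using Qs xIx_0 unfolding infra_def by auto
    have k0: "0 < k" using k by simp
    show ?thesis by (rule hpoly0[OF k0 \<open>Q s \<in> hpoly 0 k\<close>])
  next
    case (Suc s')
    then show ?thesis using Qs unfolding xIx_def by (auto simp: xpow0_Suc)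
  qed
qed

theorem mainTheorem14:
  fixes m k :: nat
  assumes "2 \<le> k"
  shows "(\<forall>s \<le> k div 2. xIx m k s \<subseteq> hpoly m k)
    \<and> (\<forall>P \<in> hpoly m k. \<exists>Q. (\<forall>s \<le> k div 2. Q s \<in> xIx m k s)
          \<and> P = (\<lambda>\<alpha> C. \<Sum>s \<le> k div 2. Q s \<alpha> C))
    \<and> (\<forall>Q. (\<forall>s \<le> k div 2. Q s \<in> xIx m k s)
          \<and> (\<lambda>\<alpha> C. \<Sum>s \<le> k div 2. Q s \<alpha> C) = (\<lambda>\<alpha> C. 0)
          \<longrightarrow> (\<forall>s \<le> k div 2. Q s = (\<lambda>\<alpha> C. 0)))"
proof (cases "m = 0")
  case True
  have A: "\<forall>s \<le> k div 2. xIx 0 k s \<subseteq> hpoly 0 k" using xIx_hpoly by blast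
  show ?thesis unfolding True by (rule conjI[OF A main_zero[OF assms]])
next
  case False
  then have m: "0 < m" by simp
  have A: "\<forall>s \<le> k div 2. xIx m k s \<subseteq> hpoly m k" using xIx_hpoly by blast
  show ?thesis by (rule conjI[OF A main_pos[OF m]])
qed


end
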